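(* Let $\Omega_\delta$ be a discrete domain, $a$ a face of $\Omega_\delta$, and $[\Omega_\delta,a]$ the double cover of $\Omega_\delta$ ramified at $a$. Let $b_1,\dots,b_{2n}$ be distinct medial vertices (edge midpoints) of $\Omega_\delta$, each with a fixed chosen lift $\hat b_j$ in $[\Omega_\delta,a]$, and let $\gamma\in C(b_1,\dots,b_{2n})$ be a configuration. Then for any two admissible choices of walks $\langle\gamma_1,\dots,\gamma_n\rangle$ and $\langle\tilde\gamma_1,\dots,\tilde\gamma_n\rangle$ from $\gamma$, $$(-1)^{\#L(\gamma\setminus\bigcup_i\gamma_i,\,a)}\prod_{i=1}^n\operatorname{Sheet}(\gamma_i)=(-1)^{\#L(\gamma\setminus\bigcup_i\tilde\gamma_i,\,a)}\prod_{i=1}^n\operatorname{Sheet}(\tilde\gamma_i).$$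
   Context: $\Omega_\delta$ is a finite piece of the rotated square lattice $(1+i)\mathbb{Z}^2\delta$ (vertices, edges of length $\sqrt2\delta$, square faces); $a$ is identified with the center of one of its faces. Configuration: $C(b_1,\dots,b_{2n})$ is the set of collections $\gamma$ of edges and half-edges of $\Omega_\delta$ (a half-edge joins an edge midpoint to one endpoint of that edge) such that at each $b_j$ exactly one half-edge of the edge through $b_j$ is present and every vertex of $\Omega_\delta$ has even degree in $\gamma$. An admissible choice of walks from $\gamma$ is a decomposition of $\gamma$ into $n$ edge-disjoint walks $\gamma_1,\dots,\gamma_n$, each $\gamma_i$ a walk in $\gamma$ joining two of the points $b_j$, each $b_j$ being an endpoint of exactly one walk, together with the remainder $\gamma\setminus\bigcup_i\gamma_i$, which has even degree at every vertex (a union of loops). Loop number: for an edge set $A$ with even degree at every vertex, $\#L(A,a)$ is the number of loops surrounding the face $a$ when $A$ is decomposed into edge-disjoint closed loops without crossings (only its parity matters). Sheet number: for a walk $w$ from $b_j$ to $b_k$, $\operatorname{Sheet}(w)=1$ if the lift of $w$ to $[\Omega_\delta,a]$ starting at $\hat b_j$ ends at $\hat b_k$, and $-1$ otherwise. *)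

theory Defs
  imports "HOL-Complex_Analysis.Complex_Analysis"
begin

definition lat_vertex :: "real \<Rightarrow> complex \<Rightarrow> bool" where
  "lat_vertex \<delta> z \<longleftrightarrow>
     (\<exists>m k :: int. z = of_real \<delta> * (1 + \<i>) * (of_int m + \<i> * of_int k))"

text \<open>A face is identified with its center; the face with bottom corner v has center v + i delta
  and corners center +- delta, center +- i delta.\<close>
definition face_center :: "real \<Rightarrow> complex \<Rightarrow> bool" where
  "face_center \<delta> c \<longleftrightarrow> lat_vertex \<delta> (c - \<i> * of_real \<delta>)"

definition face_edges :: "real \<Rightarrow> complex \<Rightarrow> complex set set" where
  "face_edges \<delta> c =
     {{c - \<i> * of_real \<delta>, c + of_real \<delta>}, {c + of_real \<delta>, c + \<i> * of_real \<delta>},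
      {c + \<i> * of_real \<delta>, c - of_real \<delta>}, {c - of_real \<delta>, c - \<i> * of_real \<delta>}}"

text \<open>The discrete domain is given by its (finite) set F of faces (face centers).\<close>
definition dom_edges :: "real \<Rightarrow> complex set \<Rightarrow> complex set set" where
  "dom_edges \<delta> F = \<Union> (face_edges \<delta> ` F)"

definition dom_vertices :: "real \<Rightarrow> complex set \<Rightarrow> complex set" where
  "dom_vertices \<delta> F = \<Union> (dom_edges \<delta> F)"

definition medial :: "real \<Rightarrow> complex set \<Rightarrow> complex set" where
  "medial \<delta> F = {(u + v) / 2 | u v. {u, v} \<in> dom_edges \<delta> F}"

text \<open>Half-edges: unordered pairs {midpoint of an edge, one endpoint of that edge}.
  An edge of the domain is represented by its two half-edges.\<close>
definition half_edges :: "real \<Rightarrow> complex set \<Rightarrow> complex set set" where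
  "half_edges \<delta> F = {{(u + v) / 2, u} | u v. {u, v} \<in> dom_edges \<delta> F}"

definition deg :: "complex set set \<Rightarrow> complex \<Rightarrow> nat" where
  "deg A v = card {h \<in> A. v \<in> h}"

definition config ::
  "real \<Rightarrow> complex set \<Rightarrow> (nat \<Rightarrow> complex) \<Rightarrow> nat \<Rightarrow> complex set set \<Rightarrow> bool" where
  "config \<delta> F b n \<gamma> \<longleftrightarrow>
     \<gamma> \<subseteq> half_edges \<delta> F \<and>
     (\<forall>j<2*n. \<forall>u v. {u, v} \<in> dom_edges \<delta> F \<and> b j = (u + v) / 2 \<longrightarrow>
         ({(u + v) / 2, u} \<in> \<gamma> \<longleftrightarrow> {(u + v) / 2, v} \<notin> \<gamma>)) \<and>
     (\<forall>v \<in> dom_vertices \<delta> F. even (deg \<gamma> v))"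

definition steps :: "complex list \<Rightarrow> complex set list" where
  "steps w = map (\<lambda>k. {w ! k, w ! Suc k}) [0..<length w - 1]"

definition trail_in :: "complex set set \<Rightarrow> complex list \<Rightarrow> bool" where
  "trail_in A w \<longleftrightarrow> 2 \<le> length w \<and> distinct (steps w) \<and> set (steps w) \<subseteq> A"

definition remainder :: "complex set set \<Rightarrow> complex list list \<Rightarrow> complex set set" where
  "remainder \<gamma> ws = \<gamma> - (\<Union>w \<in> set ws. set (steps w))"

definition admissible ::
  "real \<Rightarrow> complex set \<Rightarrow> (nat \<Rightarrow> complex) \<Rightarrow> nat \<Rightarrow> complex set set \<Rightarrow> complex list list \<Rightarrow> bool" where
  "admissible \<delta> F b n \<gamma> ws \<longleftrightarrow>
     length ws = n \<and>
     (\<forall>i<n. trail_in \<gamma> (ws ! i) \<and> hd (ws ! i) \<in> b ` {..<2*n} \<and> last (ws ! i) \<in> b ` {..<2*n}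
            \<and> hd (ws ! i) \<noteq> last (ws ! i)) \<and>
     (\<forall>i<n. \<forall>i'<n. i \<noteq> i' \<longrightarrow> set (steps (ws ! i)) \<inter> set (steps (ws ! i')) = {}) \<and>
     (\<forall>j<2*n. \<exists>!i. i < n \<and> (b j = hd (ws ! i) \<or> b j = last (ws ! i))) \<and>
     (\<forall>v \<in> dom_vertices \<delta> F. even (deg (remainder \<gamma> ws) v))"

fun polypath :: "complex list \<Rightarrow> real \<Rightarrow> complex" where
  "polypath [] = linepath 0 0"
| "polypath [p] = linepath p p"
| "polypath (p # q # rest) = linepath p q +++ polypath (q # rest)"

text \<open>Closed loop in A without crossings: at a vertex of degree 4 in A, a passage never goes
  straight through (the only crossing pairing on the square lattice is the straight one).\<close>
definition noncrossing_loop :: "complex set set \<Rightarrow> complex list \<Rightarrow> bool" where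
  "noncrossing_loop A l \<longleftrightarrow>
     trail_in A l \<and> hd l = last l \<and>
     (\<forall>k < length l - 1.
        let r = length l - 1;
            prev = l ! (if k = 0 then r - 1 else k - 1);
            cur = l ! k;
            nxt = l ! Suc k
        in deg A cur = 4 \<longrightarrow> prev + nxt \<noteq> 2 * cur)"

definition loop_decomp :: "complex set set \<Rightarrow> complex list list \<Rightarrow> bool" where
  "loop_decomp A Ls \<longleftrightarrow>
     (\<forall>l \<in> set Ls. noncrossing_loop A l) \<and>
     (\<forall>i<length Ls. \<forall>i'<length Ls. i \<noteq> i' \<longrightarrow> set (steps (Ls ! i)) \<inter> set (steps (Ls ! i')) = {}) \<and>
     (\<Union>l \<in> set Ls. set (steps l)) = A"

definition loops_around :: "complex \<Rightarrow> complex list list \<Rightarrow> nat" where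
  "loops_around a Ls = length (filter (\<lambda>l. winding_number (polypath l) a \<noteq> 0) Ls)"

text \<open>The double cover ramified at a is realised as {(z,w). w^2 = z - a}; a lift of a point z is
  given by a square root of z - a. hat assigns to each b_j the chosen lift.\<close>
definition sheet :: "complex \<Rightarrow> (complex \<Rightarrow> complex) \<Rightarrow> complex list \<Rightarrow> int" where
  "sheet a hat w =
     (if \<exists>g. continuous_on {0..1} g \<and> (\<forall>t\<in>{0..1}. (g t)^2 = polypath w t - a) \<and>
             g 0 = hat (hd w) \<and> g 1 = hat (last w)
      then 1 else -1)"

end

theory Submission
  imports Defs
begin


lemma polypath_start: "w \<noteq> [] \<Longrightarrow> pathstart (polypath w) = hd w"
  by (induction w rule: polypath.induct) (auto simp: pathstart_join)

lemma polypath_finish: "w \<noteq> [] \<Longrightarrow> pathfinish (polypath w) = last w"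
  by (induction w rule: polypath.induct) (auto simp: pathfinish_join)

lemma polypath_path: "path (polypath w)"
  by (induction w rule: polypath.induct) (auto simp: polypath_start path_const)

lemma polypath_image_Cons2:
  "path_image (polypath (p # q # rest)) = closed_segment p q \<union> path_image (polypath (q # rest))"
  by (simp add: path_image_join polypath_start)

lemma polypath_image_single: "path_image (polypath [p]) = {p}"
  by simp

lemma winding_polypath:
  "w \<noteq> [] \<Longrightarrow> a \<notin> path_image (polypath w) \<Longrightarrow>
   winding_number (polypath w) a = (\<Sum>k<length w - 1. winding_number (linepath (w!k) (w!Suc k)) a)"
proof (induction w rule: polypath.induct)
  case 1 then show ?case by simp
next
  case (2 p) then show ?case by (simp add: winding_number_zero_const)
next
  case (3 p q rest)
  have ap: "a \<notin> closed_segment p q" and ar: "a \<notin> path_image (polypath (q#rest))"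
    using "3.prems" unfolding polypath_image_Cons2 by auto
  have "winding_number (polypath (p # q # rest)) a
      = winding_number (linepath p q) a + winding_number (polypath (q#rest)) a"
    using ap ar by (simp add: winding_number_join polypath_path polypath_start)
  also have "winding_number (polypath (q#rest)) a = (\<Sum>k<length (q#rest) - 1. winding_number (linepath ((q#rest)!k) ((q#rest)!Suc k)) a)"
    using "3.IH" ar by simp
  finally show ?case
    by (simp add: sum.lessThan_Suc_shift del: sum.lessThan_Suc)
qed


lemma sq_one_cases: "(z::complex)^2 = 1 \<Longrightarrow> z = 1 \<or> z = -1"
  by (metis power2_eq_iff power_one)

lemma sheet_char:
  assumes w: "w \<noteq> []" and a: "a \<notin> path_image (polypath w)"
    and h: "(hat (hd w))^2 = hd w - a"
  shows "sheet a hat w = (if hat (hd w) * exp (pi * \<i> * winding_number (polypath w) a) = hat (last w) then 1 else -1)"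
proof -
  let ?p = "polypath w"
  let ?W = "winding_number (polypath w) a"
  obtain q where q: "path q" "pathfinish q - pathstart q = 2 * of_real pi * \<i> * ?W"
      "\<And>t. t \<in> {0..1} \<Longrightarrow> ?p t = a + exp (q t)"
    using winding_number_as_continuous_log[OF polypath_path a] by blast
  define e where "e t = exp (q t / 2)" for t
  have e2: "(e t)^2 = exp (q t)" for t
    by (simp add: e_def power2_eq_square exp_add[symmetric])
  have p0: "?p 0 = hd w" using polypath_start[OF w] by (simp add: pathstart_def)
  have p1: "?p 1 = last w" using polypath_finish[OF w] by (simp add: pathfinish_def)
  have "(hat (hd w))^2 = (e 0)^2" using h q(3)[of 0] p0 e2 by simp
  then have hs: "hat (hd w) = e 0 \<or> hat (hd w) = - e 0" by (simp add: power2_eq_iff)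
  define s where "s = hat (hd w) / e 0"
  have e0: "e t \<noteq> 0" for t by (simp add: e_def)
  have s: "s = 1 \<or> s = -1" using hs e0 by (auto simp: s_def)
  have sne: "s \<noteq> 0" using s by auto
  define G where "G t = s * e t" for t
  have G0: "G 0 = hat (hd w)" using e0 by (simp add: G_def s_def)
  have q1: "q 1 = q 0 + 2 * of_real pi * \<i> * ?W" using q(2) by (simp add: pathstart_def pathfinish_def algebra_simps)
  have G1: "G 1 = hat (hd w) * exp (pi * \<i> * ?W)"
  proof -
    have "e 1 = e 0 * exp (pi * \<i> * ?W)"
      by (simp add: e_def q1 exp_add[symmetric] add_divide_distrib mult.assoc)
    then show ?thesis using e0 by (simp add: G_def s_def)
  qed
  have Gc: "continuous_on {0..1} G"
    unfolding G_def e_def using q(1) unfolding path_def by (intro continuous_intros) auto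
  have G2: "t \<in> {0..1} \<Longrightarrow> (G t)^2 = ?p t - a" for t
    using s e2[of t] q(3)[of t] by (auto simp: G_def power_mult_distrib)
  have "(\<exists>g. continuous_on {0..1} g \<and> (\<forall>t\<in>{0..1}. (g t)^2 = ?p t - a) \<and>
             g 0 = hat (hd w) \<and> g 1 = hat (last w)) \<longleftrightarrow> G 1 = hat (last w)"
  proof
    assume "G 1 = hat (last w)"
    then show "\<exists>g. continuous_on {0..1} g \<and> (\<forall>t\<in>{0..1}. (g t)^2 = ?p t - a) \<and>
             g 0 = hat (hd w) \<and> g 1 = hat (last w)"
      using Gc G2 G0 by blast
  next
    assume "\<exists>g. continuous_on {0..1} g \<and> (\<forall>t\<in>{0..1}. (g t)^2 = ?p t - a) \<and>
             g 0 = hat (hd w) \<and> g 1 = hat (last w)"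
    then obtain g where g: "continuous_on {0..1} g" "\<forall>t\<in>{0..1}. (g t)^2 = ?p t - a"
      "g 0 = hat (hd w)" "g 1 = hat (last w)" by blast
    have Gnz: "G t \<noteq> 0" for t using sne e0 by (simp add: G_def)
    define f where "f t = g t / G t" for t
    have fc: "continuous_on {0..1} f" unfolding f_def
      using g(1) Gc Gnz by (intro continuous_intros) auto
    have f2: "t \<in> {0..1} \<Longrightarrow> f t = 1 \<or> f t = -1" for t
    proof -
      assume t: "t \<in> {0..1}"
      have "(f t)^2 = (g t)^2 / (G t)^2" by (simp add: f_def power_divide)
      also have "\<dots> = 1"
      proof -
        have "(g t)^2 = (G t)^2" using g(2) t G2[OF t] by simp
        moreover have "(G t)^2 \<noteq> 0" using Gnz[of t] by simp
        ultimately show ?thesis by simp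
      qed
      finally show ?thesis by (rule sq_one_cases)
    qed
    have "f constant_on {0..1}"
    proof (rule continuous_discrete_range_constant[OF _ fc])
      show "connected {0..1::real}" by simp
      fix x assume x: "x \<in> {0..1::real}"
      show "\<exists>e>0. \<forall>y. y \<in> {0..1} \<and> f y \<noteq> f x \<longrightarrow> e \<le> norm (f y - f x)"
      proof (rule exI[of _ 1], intro conjI allI impI)
        fix y assume y: "y \<in> {0..1} \<and> f y \<noteq> f x"
        then have "f y = 1 \<and> f x = -1 \<or> f y = -1 \<and> f x = 1" using f2[of x] f2[of y] x by auto
        then show "1 \<le> norm (f y - f x)" by auto
      qed simp
    qed
    then obtain c where c: "\<And>t. t \<in> {0..1} \<Longrightarrow> f t = c" by (auto simp: constant_on_def)
    have "f 0 = 1" using G0 g(3) Gnz[of 0] by (simp add: f_def)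
    then have "f 1 = 1" using c[of 0] c[of 1] by simp
    then have "g 1 = G 1" using Gnz[of 1] by (simp add: f_def field_simps)
    then show "G 1 = hat (last w)" using g(4) by simp
  qed
  then show ?thesis unfolding sheet_def p0 using G1 by simp
qed


definition rt :: "complex \<Rightarrow> complex \<Rightarrow> complex" where "rt a z = csqrt (z - a)"
definition Wn :: "complex \<Rightarrow> complex \<Rightarrow> complex \<Rightarrow> complex" where
  "Wn a x y = winding_number (linepath x y) a"
definition sig :: "complex \<Rightarrow> complex \<Rightarrow> complex \<Rightarrow> complex" where
  "sig a x y = rt a x * exp (pi * \<i> * Wn a x y) / rt a y"
definition sigs :: "complex \<Rightarrow> complex set \<Rightarrow> complex" where
  "sigs a h = (let p = (SOME p. h = {fst p, snd p}) in sig a (fst p) (snd p))"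

definition pm1 :: "complex \<Rightarrow> bool" where "pm1 z \<longleftrightarrow> z = 1 \<or> z = -1"

lemma pm1_mult: "pm1 x \<Longrightarrow> pm1 y \<Longrightarrow> pm1 (x * y)" by (auto simp: pm1_def)
lemma pm1_sq: "pm1 x \<Longrightarrow> x * x = 1" by (auto simp: pm1_def)
lemma pm1_prod: "(\<And>x. x \<in> S \<Longrightarrow> pm1 (f x)) \<Longrightarrow> pm1 (prod f S)"
proof (induction S rule: infinite_finite_induct)
  case (insert x F) then show ?case by (simp add: pm1_mult)
qed (auto simp: pm1_def)
lemma pm1_iff_sq: "pm1 x \<longleftrightarrow> x^2 = 1" by (auto simp: pm1_def dest: sq_one_cases)

lemma rt_sq: "(rt a z)^2 = z - a" by (simp add: rt_def)
lemma rt_nz: "z \<noteq> a \<Longrightarrow> rt a z \<noteq> 0" by (simp add: rt_def)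

lemma Wn_rev: "a \<notin> closed_segment x y \<Longrightarrow> Wn a y x = - Wn a x y"
  unfolding Wn_def
  by (metis path_linepath path_image_linepath reversepath_linepath winding_number_reversepath)

lemma Wn_exp2: assumes "a \<notin> closed_segment x y"
  shows "exp (2 * pi * \<i> * Wn a x y) = (y - a) / (x - a)"
proof -
  obtain q where q: "path q" "pathfinish q - pathstart q = 2 * of_real pi * \<i> * Wn a x y"
      "\<And>t. t \<in> {0..1} \<Longrightarrow> linepath x y t = a + exp (q t)"
    using winding_number_as_continuous_log[of "linepath x y" a] assms unfolding Wn_def by auto
  have ex: "x - a = exp (q 0)" "y - a = exp (q 1)" using q(3)[of 0] q(3)[of 1] by (auto simp: linepath_def)
  have q1: "q 1 = q 0 + 2 * of_real pi * \<i> * Wn a x y" using q(2)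
    by (simp add: pathstart_def pathfinish_def algebra_simps)
  show ?thesis unfolding ex q1 by (simp add: exp_add)
qed

lemma sig_pm1: assumes "a \<notin> closed_segment x y" shows "pm1 (sig a x y)"
proof -
  have xa: "x \<noteq> a" "y \<noteq> a" using assms by auto
  have e: "exp (pi * \<i> * Wn a x y) ^ 2 = (y - a) / (x - a)"
    using Wn_exp2[OF assms] by (simp add: exp_of_nat_mult[symmetric] mult.assoc)
  have "(sig a x y)^2 = (rt a x)^2 * exp (pi * \<i> * Wn a x y) ^ 2 / (rt a y)^2"
    by (simp add: sig_def power_mult_distrib power_divide)
  also have "\<dots> = 1" using xa by (simp add: e rt_sq)
  finally show ?thesis by (simp add: pm1_iff_sq)
qed

lemma sig_sym: assumes "a \<notin> closed_segment x y" shows "sig a y x = sig a x y"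
proof -
  have xa: "x \<noteq> a" "y \<noteq> a" using assms by auto
  have "sig a x y * sig a y x = 1"
    using xa rt_nz[of x a] rt_nz[of y a]
    by (simp add: sig_def Wn_rev[OF assms] exp_minus field_simps)
  moreover have "sig a x y * sig a x y = 1" using sig_pm1[OF assms] by (rule pm1_sq)
  ultimately have "sig a y x = sig a x y * (sig a x y * sig a y x)" by (metis mult.assoc mult_1)
  then show ?thesis using \<open>sig a x y * sig a y x = 1\<close> by simp
qed

lemma sigs_eq: assumes "a \<notin> closed_segment x y" shows "sigs a {x, y} = sig a x y"
proof -
  let ?p = "SOME p. {x, y} = {fst p, snd p}"
  have "{x, y} = {fst ?p, snd ?p}" by (rule someI[of _ "(x, y)"]) simp
  then have "?p = (x, y) \<or> ?p = (y, x)" by (auto simp: doubleton_eq_iff prod_eq_iff)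
  then show ?thesis using sig_sym[OF assms] by (auto simp: sigs_def Let_def)
qed

lemma telescope:
  assumes "w \<noteq> []" "\<forall>k < length w - 1. a \<notin> closed_segment (w!k) (w!Suc k)" "a \<notin> set w"
  shows "(\<Prod>k<length w - 1. exp (pi * \<i> * Wn a (w!k) (w!Suc k))) * rt a (hd w)
       = (\<Prod>k<length w - 1. sig a (w!k) (w!Suc k)) * rt a (last w)"
  using assms
proof (induction w rule: polypath.induct)
  case 1 then show ?case by simp
next
  case (2 p) then show ?case by simp
next
  case (3 p q rest)
  have IH: "(\<Prod>k<length (q#rest) - 1. exp (pi * \<i> * Wn a ((q#rest)!k) ((q#rest)!Suc k))) * rt a (hd (q#rest))
       = (\<Prod>k<length (q#rest) - 1. sig a ((q#rest)!k) ((q#rest)!Suc k)) * rt a (last (q#rest))"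
  proof (rule "3.IH")
    show "\<forall>k<length (q # rest) - 1. a \<notin> closed_segment ((q # rest) ! k) ((q # rest) ! Suc k)"
    proof (intro allI impI)
      fix k assume "k < length (q # rest) - 1"
      then have "Suc k < length (p#q#rest) - 1" by simp
      then show "a \<notin> closed_segment ((q # rest) ! k) ((q # rest) ! Suc k)"
        using "3.prems"(2) by fastforce
    qed
  qed (use "3.prems" in auto)
  have nz: "rt a q \<noteq> 0" using "3.prems"(3) by (intro rt_nz) auto
  have E: "exp (pi * \<i> * Wn a p q) * rt a p = sig a p q * rt a q"
    using nz by (simp add: sig_def)
  let ?E = "\<lambda>k. exp (pi * \<i> * Wn a ((q#rest)!k) ((q#rest)!Suc k))"
  let ?S = "\<lambda>k. sig a ((q#rest)!k) ((q#rest)!Suc k)"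
  have L: "(\<Prod>k<length (p#q#rest) - 1. exp (pi * \<i> * Wn a ((p#q#rest)!k) ((p#q#rest)!Suc k)))
     = exp (pi * \<i> * Wn a p q) * (\<Prod>k<length (q#rest) - 1. ?E k)"
    by (simp add: prod.lessThan_Suc_shift del: prod.lessThan_Suc)
  have R: "(\<Prod>k<length (p#q#rest) - 1. sig a ((p#q#rest)!k) ((p#q#rest)!Suc k))
     = sig a p q * (\<Prod>k<length (q#rest) - 1. ?S k)"
    by (simp add: prod.lessThan_Suc_shift del: prod.lessThan_Suc)
  have "exp (pi * \<i> * Wn a p q) * (\<Prod>k<length (q#rest) - 1. ?E k) * rt a p
      = (\<Prod>k<length (q#rest) - 1. ?E k) * (exp (pi * \<i> * Wn a p q) * rt a p)" by (simp only: ac_simps)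
  also have "\<dots> = sig a p q * ((\<Prod>k<length (q#rest) - 1. ?E k) * rt a (hd (q#rest)))"
    unfolding E by (simp only: ac_simps list.sel)
  also have "\<dots> = sig a p q * (\<Prod>k<length (q#rest) - 1. ?S k) * rt a (last (q#rest))"
    unfolding IH by (simp only: ac_simps)
  finally show ?case unfolding L R by simp
qed


definition GI :: "complex \<Rightarrow> bool" where
  "GI z \<longleftrightarrow> (\<exists>x y :: int. z = Complex (of_int x) (of_int y))"
definition U4 :: "complex \<Rightarrow> bool" where
  "U4 e \<longleftrightarrow> e = 1 \<or> e = -1 \<or> e = \<i> \<or> e = -\<i>"
definition n1 :: "complex \<Rightarrow> real" where "n1 z = \<bar>Re z\<bar> + \<bar>Im z\<bar>"

lemma n1_tri: "n1 (x + y) \<le> n1 x + n1 y" by (simp add: n1_def abs_triangle_ineq add_mono)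
lemma n1_commute: "n1 (x - y) = n1 (y - x)" by (simp add: n1_def abs_minus_commute)
lemma n1_tri2: "n1 (x - z) \<le> n1 (x - y) + n1 (y - z)"
  using n1_tri[of "x - y" "y - z"] by simp
lemma n1_unit: "U4 e \<Longrightarrow> n1 (of_real s * e) = \<bar>s\<bar>" by (auto simp: U4_def n1_def)

lemma abs_comb: assumes "0 \<le> u" "u \<le> 1"
  shows "\<bar>(1 - u) * A + u * B\<bar> \<le> (1 - u) * \<bar>A\<bar> + u * \<bar>B::real\<bar>"
proof -
  have "\<bar>(1-u)*A + u*B\<bar> \<le> \<bar>(1-u)*A\<bar> + \<bar>u*B\<bar>" by (rule abs_triangle_ineq)
  also have "\<dots> = (1-u)*\<bar>A\<bar> + u*\<bar>B\<bar>" using assms by (simp add: abs_mult)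
  finally show ?thesis .
qed

lemma convex_n1ball: "convex {z. n1 (z - c) \<le> r}"
  unfolding convex_alt
proof (intro ballI allI impI)
  fix x y :: complex and u :: real
  assume x: "x \<in> {z. n1 (z - c) \<le> r}" and y: "y \<in> {z. n1 (z - c) \<le> r}" and u: "0 \<le> u \<and> u \<le> 1"
  have eq: "(1 - u) *\<^sub>R x + u *\<^sub>R y - c = (1 - u) *\<^sub>R (x - c) + u *\<^sub>R (y - c)"
    by (simp add: algebra_simps)
  have "n1 ((1 - u) *\<^sub>R (x - c) + u *\<^sub>R (y - c)) \<le> (1 - u) * n1 (x - c) + u * n1 (y - c)"
  proof -
    have a: "\<bar>(1 - u) * Re (x - c) + u * Re (y - c)\<bar> \<le> (1-u) * \<bar>Re (x - c)\<bar> + u * \<bar>Re (y - c)\<bar>"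
      using u by (intro abs_comb) auto
    have b: "\<bar>(1 - u) * Im (x - c) + u * Im (y - c)\<bar> \<le> (1-u) * \<bar>Im (x - c)\<bar> + u * \<bar>Im (y - c)\<bar>"
      using u by (intro abs_comb) auto
    show ?thesis using a b by (simp add: n1_def algebra_simps)
  qed
  also have "\<dots> \<le> (1 - u) * r + u * r"
    using x y u by (intro add_mono mult_left_mono) auto
  finally show "(1 - u) *\<^sub>R x + u *\<^sub>R y \<in> {z. n1 (z - c) \<le> r}" by (simp add: eq algebra_simps)
qed

lemma GI_E: "GI z \<Longrightarrow> (\<And>x y::int. z = Complex (of_int x) (of_int y) \<Longrightarrow> P) \<Longrightarrow> P"
  by (auto simp: GI_def)

lemma half_E:
  assumes "GI v" "U4 e"
  obtains x y :: int where "v + e/2 = Complex (of_int x / 2) (of_int y / 2)" "odd (x + y)"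
proof -
  obtain a b :: int where v: "v = Complex (of_int a) (of_int b)" using assms(1) by (auto simp: GI_def)
  consider "e = 1" | "e = -1" | "e = \<i>" | "e = -\<i>" using assms(2) by (auto simp: U4_def)
  then show ?thesis
  proof cases
    case 1 then show ?thesis by (intro that[of "2*a+1" "2*b"]) (auto simp: v complex_eq_iff)
  next
    case 2 then show ?thesis by (intro that[of "2*a-1" "2*b"]) (auto simp: v complex_eq_iff)
  next
    case 3 then show ?thesis by (intro that[of "2*a" "2*b+1"]) (auto simp: v complex_eq_iff)
  next
    case 4 then show ?thesis by (intro that[of "2*a" "2*b-1"]) (auto simp: v complex_eq_iff)
  qed
qed

lemma GI_dist: assumes "GI v" "GI w" "v \<noteq> w" shows "n1 (v - w) \<ge> 1"
proof -
  obtain a b c d :: int where v: "v = Complex (of_int a) (of_int b)" and w: "w = Complex (of_int c) (of_int d)"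
    using assms by (auto simp: GI_def)
  have "(a, b) \<noteq> (c, d)" using assms(3) v w by auto
  then have "\<bar>a - c\<bar> + \<bar>b - d\<bar> \<ge> 1" by auto
  then have "real_of_int (\<bar>a - c\<bar> + \<bar>b - d\<bar>) \<ge> 1" by linarith
  then show ?thesis by (simp add: v w n1_def)
qed

lemma half_dist:
  assumes "GI v" "U4 e" "GI w" "U4 f" "v + e/2 \<noteq> w + f/2"
  shows "n1 ((v + e/2) - (w + f/2)) \<ge> 1"
proof -
  obtain a b where ab: "v + e/2 = Complex (of_int a / 2) (of_int b / 2)" "odd (a + b)"
    using half_E[OF assms(1,2)] by blast
  obtain c d where cd: "w + f/2 = Complex (of_int c / 2) (of_int d / 2)" "odd (c + d)"
    using half_E[OF assms(3,4)] by blast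
  have "a \<noteq> c \<or> b \<noteq> d" using assms(5) ab cd by auto
  then have "\<bar>a - c\<bar> + \<bar>b - d\<bar> \<ge> 2" using ab(2) cd(2) unfolding abs_if by presburger
  then have "real_of_int (\<bar>a - c\<bar> + \<bar>b - d\<bar>) \<ge> 2" by linarith
  then have "\<bar>real_of_int a - real_of_int c\<bar> + \<bar>real_of_int b - real_of_int d\<bar> \<ge> 2" by simp
  then show ?thesis unfolding ab cd n1_def by (simp add: abs_divide diff_divide_distrib[symmetric])
qed

lemma GI_half_close:
  assumes "GI v" "GI u" "U4 e" "n1 (v - (u + e/2)) < 3/2"
  obtains f where "U4 f" "u + e/2 = v + f/2"
proof -
  obtain a b :: int where v: "v = Complex (of_int a) (of_int b)" using assms(1) by (auto simp: GI_def)
  obtain c d where cd: "u + e/2 = Complex (of_int c / 2) (of_int d / 2)" "odd (c + d)"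
    using half_E[OF assms(2,3)] by blast
  have "\<bar>real_of_int a - real_of_int c / 2\<bar> + \<bar>real_of_int b - real_of_int d / 2\<bar> < 3/2"
    using assms(4) unfolding cd v n1_def by simp
  then have "\<bar>2 * real_of_int a - real_of_int c\<bar> + \<bar>2 * real_of_int b - real_of_int d\<bar> < 3" by linarith
  then have "real_of_int (\<bar>2*a - c\<bar> + \<bar>2*b - d\<bar>) < 3" by simp
  then have lt: "\<bar>2*a - c\<bar> + \<bar>2*b - d\<bar> < 3" by linarith
  have cases: "(c = 2*a+1 \<and> d = 2*b) \<or> (c = 2*a-1 \<and> d = 2*b) \<or> (c = 2*a \<and> d = 2*b+1) \<or> (c = 2*a \<and> d = 2*b-1)"
    using lt cd(2) by presburger
  then show ?thesis
  proof (elim disjE)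
    assume h: "c = 2*a+1 \<and> d = 2*b" show ?thesis
    proof (rule that[of 1])
      show "u + e / 2 = v + 1 / 2" unfolding cd(1) v using h by (simp add: complex_eq_iff)
    qed (simp add: U4_def)
  next
    assume h: "c = 2*a-1 \<and> d = 2*b" show ?thesis
    proof (rule that[of "-1"])
      show "u + e / 2 = v + (-1) / 2" unfolding cd(1) v using h by (simp add: complex_eq_iff)
    qed (simp add: U4_def)
  next
    assume h: "c = 2*a \<and> d = 2*b+1" show ?thesis
    proof (rule that[of "\<i>"])
      show "u + e / 2 = v + \<i> / 2" unfolding cd(1) v using h by (simp add: complex_eq_iff)
    qed (simp add: U4_def)
  next
    assume h: "c = 2*a \<and> d = 2*b-1" show ?thesis
    proof (rule that[of "-\<i>"])
      show "u + e / 2 = v + (-\<i>) / 2" unfolding cd(1) v using h by (simp add: complex_eq_iff)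
    qed (simp add: U4_def)
  qed
qed

lemma GI_center: assumes "GI v" shows "n1 ((1 + \<i>)/2 - v) \<ge> 1"
proof -
  obtain a b :: int where v: "v = Complex (of_int a) (of_int b)" using assms by (auto simp: GI_def)
  have "\<bar>1 - 2*a\<bar> \<ge> 1" "\<bar>1 - 2*b\<bar> \<ge> 1" by presburger+
  then have "real_of_int \<bar>1 - 2*a\<bar> \<ge> 1" "real_of_int \<bar>1 - 2*b\<bar> \<ge> 1" by linarith+
  then have "\<bar>1 - 2 * real_of_int a\<bar> + \<bar>1 - 2 * real_of_int b\<bar> \<ge> 2" by simp
  then show ?thesis by (simp add: v n1_def complex_eq_iff)
qed

lemma GI_not_half: assumes "GI v" "U4 e" shows "\<not> GI (v + e/2)"
proof
  assume "GI (v + e/2)"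
  then obtain x y :: int where xy: "v + e/2 = Complex (of_int x) (of_int y)" by (auto simp: GI_def)
  obtain c d where cd: "v + e/2 = Complex (of_int c / 2) (of_int d / 2)" "odd (c + d)"
    using half_E[OF assms] by blast
  have "real_of_int c = real_of_int (2*x)" "real_of_int d = real_of_int (2*y)" using xy cd(1) by (auto simp: complex_eq_iff)
  then have "c = 2*x" "d = 2*y" by linarith+
  then show False using cd(2) by presburger
qed


lemma U4_E:
  assumes "U4 e"
  obtains p q :: int where "e = Complex (of_int p) (of_int q)" "\<bar>p\<bar> + \<bar>q\<bar> = 1"
proof -
  consider "e = 1" | "e = -1" | "e = \<i>" | "e = -\<i>" using assms unfolding U4_def by blast
  then show ?thesis
  proof cases
    case 1 show ?thesis by (rule that[of 1 0]) (simp_all add: 1 complex_eq_iff)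
  next
    case 2 show ?thesis by (rule that[of "-1" 0]) (simp_all add: 2 complex_eq_iff)
  next
    case 3 show ?thesis by (rule that[of 0 1]) (simp_all add: 3 complex_eq_iff)
  next
    case 4 show ?thesis by (rule that[of 0 "-1"]) (simp_all add: 4 complex_eq_iff)
  qed
qed

lemma u1_int: "\<bar>p\<bar> + \<bar>q\<bar> = (1::int) \<Longrightarrow> (p = 1 \<and> q = 0) \<or> (p = -1 \<and> q = 0) \<or> (p = 0 \<and> q = 1) \<or> (p = 0 \<and> q = -1)"
  by (cases "p \<ge> 0"; cases "q \<ge> 0") auto

lemma half_int: "2*a + p = 2*c + (p'::int) \<Longrightarrow> 2*b + q = 2*d + (q'::int) \<Longrightarrow> \<bar>p\<bar> + \<bar>q\<bar> = 1 \<Longrightarrow> \<bar>p'\<bar> + \<bar>q'\<bar> = 1 \<Longrightarrow>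
 (c = a \<and> d = b \<and> p' = p \<and> q' = q) \<or> (c = a + p \<and> d = b + q \<and> p' = -p \<and> q' = -q)"
  apply (drule u1_int)+ apply (elim disjE) apply (simp_all) apply presburger+ done

lemma quarter_int: "4*a + p = 4*c + (p'::int) \<Longrightarrow> 4*b + q = 4*d + (q'::int) \<Longrightarrow> \<bar>p\<bar> + \<bar>q\<bar> = 1 \<Longrightarrow> \<bar>p'\<bar> + \<bar>q'\<bar> = 1 \<Longrightarrow>
 c = a \<and> d = b \<and> p' = p \<and> q' = q"
  apply (drule u1_int)+ apply (elim disjE) apply (simp_all) apply presburger+ done

lemma U4_I: "\<bar>p\<bar> + \<bar>q\<bar> = (1::int) \<Longrightarrow> U4 (Complex (of_int p) (of_int q))"
proof -
  assume "\<bar>p\<bar> + \<bar>q\<bar> = 1"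
  then have "(p = 1 \<and> q = 0) \<or> (p = -1 \<and> q = 0) \<or> (p = 0 \<and> q = 1) \<or> (p = 0 \<and> q = -1)" by (rule u1_int)
  then show ?thesis by (auto simp: U4_def complex_eq_iff)
qed

lemma half_repr:
  assumes "GI v" "GI w" "U4 e" "U4 f" "v + e/2 = w + f/2"
  shows "(w = v \<and> f = e) \<or> (w = v + e \<and> f = -e)"
proof -
  obtain a b :: int where v: "v = Complex (of_int a) (of_int b)" using assms(1) by (auto simp: GI_def)
  obtain c d :: int where w: "w = Complex (of_int c) (of_int d)" using assms(2) by (auto simp: GI_def)
  obtain p q :: int where e: "e = Complex (of_int p) (of_int q)" "\<bar>p\<bar> + \<bar>q\<bar> = 1" using U4_E[OF assms(3)] by blast
  obtain p' q' :: int where f: "f = Complex (of_int p') (of_int q')" "\<bar>p'\<bar> + \<bar>q'\<bar> = 1" using U4_E[OF assms(4)] by blast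
  have "real_of_int a + real_of_int p / 2 = real_of_int c + real_of_int p' / 2"
       "real_of_int b + real_of_int q / 2 = real_of_int d + real_of_int q' / 2"
    using assms(5) by (auto simp: v w e f complex_eq_iff)
  then have "real_of_int (2*a + p) = real_of_int (2*c + p')" "real_of_int (2*b + q) = real_of_int (2*d + q')"
    by simp_all
  then have h: "2*a + p = 2*c + p'" "2*b + q = 2*d + q'" by (simp_all only: of_int_eq_iff)
  have "(c = a \<and> d = b \<and> p' = p \<and> q' = q) \<or> (c = a + p \<and> d = b + q \<and> p' = -p \<and> q' = -q)"
    using h e(2) f(2) by (rule half_int)
  then show ?thesis by (auto simp: v w e f complex_eq_iff)
qed

lemma quarter_inj:
  assumes "GI v" "GI w" "U4 e" "U4 f" "v + e/4 = w + f/4"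
  shows "w = v \<and> f = e"
proof -
  obtain a b :: int where v: "v = Complex (of_int a) (of_int b)" using assms(1) by (auto simp: GI_def)
  obtain c d :: int where w: "w = Complex (of_int c) (of_int d)" using assms(2) by (auto simp: GI_def)
  obtain p q :: int where e: "e = Complex (of_int p) (of_int q)" "\<bar>p\<bar> + \<bar>q\<bar> = 1" using U4_E[OF assms(3)] by blast
  obtain p' q' :: int where f: "f = Complex (of_int p') (of_int q')" "\<bar>p'\<bar> + \<bar>q'\<bar> = 1" using U4_E[OF assms(4)] by blast
  have "real_of_int a + real_of_int p / 4 = real_of_int c + real_of_int p' / 4"
       "real_of_int b + real_of_int q / 4 = real_of_int d + real_of_int q' / 4"
    using assms(5) by (auto simp: v w e f complex_eq_iff)
  then have "real_of_int (4*a + p) = real_of_int (4*c + p')" "real_of_int (4*b + q) = real_of_int (4*d + q')"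
    by simp_all
  then have h: "4*a + p = 4*c + p'" "4*b + q = 4*d + q'" by (simp_all only: of_int_eq_iff)
  have "c = a \<and> d = b \<and> p' = p \<and> q' = q"
    using h e(2) f(2) by (rule quarter_int)
  then show ?thesis by (auto simp: v w e f complex_eq_iff)
qed

lemma chord_unit:
  assumes "U4 e1" "U4 e2" "U4 f" "e1 \<noteq> e2" "0 \<le> t" "t \<le> 1"
    and "of_real (1 - t) * e1 + of_real t * e2 = f"
  shows "f = e1 \<or> f = e2"
proof -
  have "t = 0 \<or> t = 1"
    using assms unfolding U4_def
    by (elim disjE; simp add: complex_eq_iff; linarith)
  then show ?thesis using assms(7) by auto
qed

lemma chords_disjoint:
  assumes "U4 e1" "U4 e2" "U4 e3" "U4 e4"
    and "e1 \<noteq> e2" "e1 \<noteq> e3" "e1 \<noteq> e4" "e2 \<noteq> e3" "e2 \<noteq> e4" "e3 \<noteq> e4"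
    and "e1 + e2 \<noteq> 0" "e3 + e4 \<noteq> 0"
    and "0 \<le> t" "t \<le> 1" "0 \<le> s" "s \<le> 1"
  shows "of_real (1 - t) * e1 + of_real t * e2 \<noteq> of_real (1 - s) * e3 + of_real s * e4"
  using assms unfolding U4_def
  by (elim disjE; simp add: complex_eq_iff; linarith)


definition stp :: "(nat \<Rightarrow> complex) \<Rightarrow> nat \<Rightarrow> complex set" where "stp L k = {L k, L (Suc k)}"
definition HEz :: "complex set \<Rightarrow> bool" where "HEz h \<longleftrightarrow> (\<exists>v e. GI v \<and> U4 e \<and> h = {v + e/2, v})"
definition nb :: "complex \<Rightarrow> real \<Rightarrow> complex set" where "nb c \<rho> = {z. n1 (z - c) \<le> \<rho>}"

lemma U4_nz: "U4 e \<Longrightarrow> e \<noteq> 0" by (auto simp: U4_def)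
lemma n1_q: "U4 e \<Longrightarrow> n1 (e/4) = 1/4" by (auto simp: U4_def n1_def)
lemma n1_h: "U4 e \<Longrightarrow> n1 (e/2) = 1/2" by (auto simp: U4_def n1_def)
lemma n1_3q: "U4 e \<Longrightarrow> n1 (3*e/4) = 3/4" by (auto simp: U4_def n1_def)
lemma n1_mq: "U4 e \<Longrightarrow> n1 (-e/4) = 1/4" by (auto simp: U4_def n1_def)
lemma n1_0: "n1 0 = 0" by (simp add: n1_def)
lemma U4_neg: "U4 e \<Longrightarrow> U4 (-e)" by (auto simp: U4_def)

lemma seg_nb: "x \<in> nb c \<rho> \<Longrightarrow> y \<in> nb c \<rho> \<Longrightarrow> closed_segment x y \<subseteq> nb c \<rho>"
  unfolding nb_def by (rule closed_segment_subset) (auto intro: convex_n1ball)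

lemma nb_close: "p \<in> nb c \<rho> \<Longrightarrow> p \<in> nb c' \<rho>' \<Longrightarrow> n1 (c - c') \<le> \<rho> + \<rho>'"
  unfolding nb_def using n1_tri2[of c c' p] n1_commute[of c p] by auto

lemma mod_Suc_ne: "2 \<le> r \<Longrightarrow> k mod r \<noteq> Suc k mod (r::nat)"
  by (metis One_nat_def le_antisym mod_Suc mod_less_divisor not_less_eq_eq not_numeral_le_zero numeral_2_eq_2 zero_less_Suc)

lemma in_seg_E:
  assumes "p \<in> closed_segment x y"
  obtains t :: real where "0 \<le> t" "t \<le> 1" "p = of_real (1 - t) * x + of_real t * y"
  using assms unfolding closed_segment_def by (auto simp: scaleR_conv_of_real)

locale zloop =
  fixes L :: "nat \<Rightarrow> complex" and r :: nat and D :: "nat \<Rightarrow> nat"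
  assumes r3: "3 \<le> r"
    and per: "\<And>k. L (k mod r) = L k"
    and he: "\<And>k. HEz (stp L k)"
    and dist: "\<And>j k. j < r \<Longrightarrow> k < r \<Longrightarrow> stp L j = stp L k \<Longrightarrow> j = k"
    and degb: "\<And>j. j < r \<Longrightarrow> GI (L j) \<Longrightarrow> card {stp L i | i. i < r \<and> L j \<in> stp L i} \<le> D j"
    and D4: "\<And>j. j < r \<Longrightarrow> GI (L j) \<Longrightarrow> D j \<le> 4"
    and nc: "\<And>j. j < r \<Longrightarrow> GI (L j) \<Longrightarrow> D j = 4 \<Longrightarrow> L (j + r - 1) + L (Suc j) \<noteq> 2 * L j"
begin

definition Q where "Q k = (L k + L (Suc k)) / 2"

lemma rpos: "0 < r" using r3 by simp

lemma Lsuc_cong: "k mod r = j mod r \<Longrightarrow> L (Suc k) = L (Suc j)"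
  by (metis mod_Suc_eq per)

lemma stp_mod: "stp L k = stp L (k mod r)"
  unfolding stp_def by (metis mod_mod_trivial Lsuc_cong per)

lemma dist': "stp L j = stp L k \<Longrightarrow> j mod r = k mod r"
  using dist[of "j mod r" "k mod r"] stp_mod[of j] stp_mod[of k] rpos by simp

lemma shape: "(GI (L k) \<and> (\<exists>e. U4 e \<and> L (Suc k) = L k + e/2)) \<or>
              (GI (L (Suc k)) \<and> (\<exists>e. U4 e \<and> L k = L (Suc k) + e/2))"
proof -
  obtain v e where ve: "GI v" "U4 e" "{L k, L (Suc k)} = {v + e/2, v}"
    using he[of k] by (auto simp: HEz_def stp_def)
  have "v + e/2 \<noteq> v" using U4_nz[OF ve(2)] by simp
  then have "(L k = v + e/2 \<and> L (Suc k) = v) \<or> (L k = v \<and> L (Suc k) = v + e/2)"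
    using ve(3) by (auto simp: doubleton_eq_iff)
  then show ?thesis using ve by auto
qed

lemma Lneq: "L k \<noteq> L (Suc k)"
  using shape[of k] U4_nz by auto

lemma GI_alt: "GI (L (Suc k)) \<longleftrightarrow> \<not> GI (L k)"
  using shape[of k] GI_not_half by auto

lemma step_ne: "stp L k \<noteq> stp L (Suc k)"
  using dist'[of k "Suc k"] mod_Suc_ne[of r k] r3 by auto

lemma corner_v:
  assumes "GI (L (Suc k))"
  obtains e1 e2 where "U4 e1" "U4 e2" "L k = L (Suc k) + e1/2" "L (Suc (Suc k)) = L (Suc k) + e2/2" "e1 \<noteq> e2"
proof -
  have "\<not> GI (L k)" using assms GI_alt by simp
  then obtain e1 where e1: "U4 e1" "L k = L (Suc k) + e1/2" using shape[of k] by auto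
  have "\<not> GI (L (Suc (Suc k)))" using assms GI_alt by simp
  then obtain e2 where e2: "U4 e2" "L (Suc (Suc k)) = L (Suc k) + e2/2" using shape[of "Suc k"] by auto
  have "e1 \<noteq> e2"
  proof
    assume "e1 = e2"
    then have "stp L k = stp L (Suc k)" using e1 e2 by (auto simp: stp_def)
    then show False using step_ne by simp
  qed
  then show ?thesis using that e1 e2 by blast
qed

lemma corner_m:
  assumes "\<not> GI (L (Suc k))"
  obtains u e where "GI u" "U4 e" "L k = u" "L (Suc k) = u + e/2" "L (Suc (Suc k)) = u + e"
proof -
  have g0: "GI (L k)" using assms GI_alt by simp
  then obtain e where e: "U4 e" "L (Suc k) = L k + e/2" using shape[of k] assms by auto
  have g2: "GI (L (Suc (Suc k)))" using assms GI_alt by simp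
  then obtain f where f: "U4 f" "L (Suc k) = L (Suc (Suc k)) + f/2" using shape[of "Suc k"] assms by auto
  have "(L (Suc (Suc k)) = L k \<and> f = e) \<or> (L (Suc (Suc k)) = L k + e \<and> f = -e)"
    using half_repr[OF g0 g2 e(1) f(1)] e(2) f(2) by simp
  moreover have "L (Suc (Suc k)) \<noteq> L k"
  proof
    assume "L (Suc (Suc k)) = L k"
    then have "stp L k = stp L (Suc k)" by (auto simp: stp_def)
    then show False using step_ne by simp
  qed
  ultimately have "L (Suc (Suc k)) = L k + e" by auto
  then show ?thesis using that g0 e by blast
qed

lemma Q_form: "\<exists>v e. GI v \<and> U4 e \<and> Q k = v + e/4 \<and> stp L k = {v, v + e/2}"
proof -
  from shape[of k] show ?thesis
  proof (elim disjE conjE exE)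
    fix e assume h: "GI (L k)" "U4 e" "L (Suc k) = L k + e/2"
    show ?thesis
      by (rule exI[of _ "L k"], rule exI[of _ e]) (simp add: h Q_def stp_def field_simps)
  next
    fix e assume h: "GI (L (Suc k))" "U4 e" "L k = L (Suc k) + e/2"
    show ?thesis
      by (rule exI[of _ "L (Suc k)"], rule exI[of _ e]) (auto simp: h Q_def stp_def field_simps)
  qed
qed

lemma Q_mod: "Q (k mod r) = Q k"
  unfolding Q_def by (metis per Lsuc_cong mod_mod_trivial)

lemma Q_inj: "j < r \<Longrightarrow> k < r \<Longrightarrow> Q j = Q k \<Longrightarrow> j = k"
proof -
  assume jk: "j < r" "k < r" "Q j = Q k"
  obtain v e where 1: "GI v" "U4 e" "Q j = v + e/4" "stp L j = {v, v + e/2}" using Q_form by blast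
  obtain w f where 2: "GI w" "U4 f" "Q k = w + f/4" "stp L k = {w, w + f/2}" using Q_form by blast
  have "w = v \<and> f = e" using quarter_inj[OF 1(1) 2(1) 1(2) 2(2)] 1(3) 2(3) jk(3) by simp
  then have "stp L j = stp L k" using 1(4) 2(4) by simp
  then show "j = k" using dist jk by blast
qed


lemma Suc_mod_less: "j < r \<Longrightarrow> Suc j mod r = (if Suc j = r then 0 else Suc j)"
  by (auto simp: mod_Suc)

lemma Suc_mod_inj: "j < r \<Longrightarrow> k < r \<Longrightarrow> Suc j mod r = Suc k mod r \<Longrightarrow> j = k"
  by (auto simp: Suc_mod_less split: if_splits)

lemma dbl_eq: "a \<noteq> 0 \<Longrightarrow> b \<noteq> 0 \<Longrightarrow> {v, v + a/2} = {v, v + b/2} \<Longrightarrow> a = (b::complex)"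
  by (auto simp: doubleton_eq_iff)

lemma S_nb: "closed_segment (Q k) (Q (Suc k)) \<subseteq> nb (L (Suc k)) (1/4)"
proof (cases "GI (L (Suc k))")
  case True
  then obtain e1 e2 where e: "U4 e1" "U4 e2" "L k = L (Suc k) + e1/2" "L (Suc (Suc k)) = L (Suc k) + e2/2"
    using corner_v by blast
  have "Q k = L (Suc k) + e1/4" unfolding Q_def e(3) by (simp add: field_simps)
  moreover have "Q (Suc k) = L (Suc k) + e2/4" unfolding Q_def e(4) by (simp add: field_simps)
  ultimately show ?thesis using n1_q[OF e(1)] n1_q[OF e(2)] by (intro seg_nb) (auto simp: nb_def)
next
  case False
  then obtain u e where e: "GI u" "U4 e" "L k = u" "L (Suc k) = u + e/2" "L (Suc (Suc k)) = u + e"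
    using corner_m by blast
  have h1: "Q k - L (Suc k) = -e/4" unfolding Q_def e(3,4) by (simp add: field_simps)
  have h2: "Q (Suc k) - L (Suc k) = e/4" unfolding Q_def e(4,5) by (simp add: field_simps)
  have "Q k \<in> nb (L (Suc k)) (1/4)" unfolding nb_def mem_Collect_eq h1 using n1_mq[OF e(2)] by simp
  moreover have "Q (Suc k) \<in> nb (L (Suc k)) (1/4)" unfolding nb_def mem_Collect_eq h2 using n1_q[OF e(2)] by simp
  ultimately show ?thesis by (rule seg_nb)
qed

lemma int_mm:
  assumes jk: "j < r" "k < r" "j \<noteq> k" and g: "\<not> GI (L (Suc j))" "\<not> GI (L (Suc k))"
  shows "closed_segment (Q j) (Q (Suc j)) \<inter> closed_segment (Q k) (Q (Suc k)) = {}"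
proof -
  obtain u e where ue: "GI u" "U4 e" "L j = u" "L (Suc j) = u + e/2" "L (Suc (Suc j)) = u + e"
    using corner_m[OF g(1)] by blast
  obtain w f where wf: "GI w" "U4 f" "L k = w" "L (Suc k) = w + f/2" "L (Suc (Suc k)) = w + f"
    using corner_m[OF g(2)] by blast
  have ne: "L (Suc j) \<noteq> L (Suc k)"
  proof
    assume eq: "L (Suc j) = L (Suc k)"
    have "(w = u \<and> f = e) \<or> (w = u + e \<and> f = -e)"
      using half_repr[OF ue(1) wf(1) ue(2) wf(2)] eq ue(4) wf(4) by simp
    then show False
    proof
      assume "w = u \<and> f = e"
      then have "stp L j = stp L k" using ue wf by (simp add: stp_def)
      then show False using dist jk by blast
    next
      assume h: "w = u + e \<and> f = -e"
      then have "stp L k = stp L (Suc j)" using ue wf eq by (auto simp: stp_def)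
      then have "k mod r = Suc j mod r" by (rule dist')
      then have "L (Suc k) = L (Suc (Suc j))" by (rule Lsuc_cong)
      moreover have "GI (L (Suc (Suc j)))" using g(1) GI_alt by simp
      ultimately show False using g(2) by simp
    qed
  qed
  have "n1 (L (Suc j) - L (Suc k)) \<ge> 1"
    using half_dist[OF ue(1,2) wf(1,2)] ne ue(4) wf(4) by simp
  moreover have "n1 (L (Suc j) - L (Suc k)) \<le> 1/2" if "p \<in> closed_segment (Q j) (Q (Suc j))" "p \<in> closed_segment (Q k) (Q (Suc k))" for p
    using nb_close[of p "L (Suc j)" "1/4" "L (Suc k)" "1/4"] S_nb[of j] S_nb[of k] that by auto
  ultimately show ?thesis by force
qed

lemma visit_turn:
  assumes jk: "j < r" "k < r" "j \<noteq> k" and g: "GI (L (Suc j))" and eq: "L (Suc j) = L (Suc k)"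
    and e: "U4 e1" "U4 e2" "L j = L (Suc j) + e1/2" "L (Suc (Suc j)) = L (Suc j) + e2/2" "e1 \<noteq> e2"
    and f: "U4 e3" "U4 e4" "L k = L (Suc k) + e3/2" "L (Suc (Suc k)) = L (Suc k) + e4/2" "e3 \<noteq> e4"
  shows "e1 + e2 \<noteq> 0" "e1 \<noteq> e3" "e1 \<noteq> e4" "e2 \<noteq> e3" "e2 \<noteq> e4"
proof -
  define v where "v = L (Suc j)"
  have nz: "e1 \<noteq> 0" "e2 \<noteq> 0" "e3 \<noteq> 0" "e4 \<noteq> 0" using e f U4_nz by auto
  show 13: "e1 \<noteq> e3"
  proof
    assume "e1 = e3"
    then have "stp L j = stp L k" using e f eq by (simp add: stp_def)
    then show False using dist jk by blast
  qed
  show 24: "e2 \<noteq> e4"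
  proof
    assume "e2 = e4"
    then have "stp L (Suc j) = stp L (Suc k)" using e f eq by (simp add: stp_def)
    then have "Suc j mod r = Suc k mod r" by (rule dist')
    then show False using Suc_mod_inj jk by blast
  qed
  show 14: "e1 \<noteq> e4"
  proof
    assume "e1 = e4"
    then have "stp L j = stp L (Suc k)" using e f eq by (auto simp: stp_def)
    then have "j mod r = Suc k mod r" by (rule dist')
    then have "L (Suc j) = L (Suc (Suc k))" by (rule Lsuc_cong)
    then show False using f(4) eq nz by simp
  qed
  show 23: "e2 \<noteq> e3"
  proof
    assume "e2 = e3"
    then have "stp L (Suc j) = stp L k" using e f eq by (auto simp: stp_def)
    then have "Suc j mod r = k mod r" by (rule dist')
    then have "L (Suc (Suc j)) = L (Suc k)" by (rule Lsuc_cong)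
    then show False using e(4) eq nz by simp
  qed
  define j' where "j' = Suc j mod r"
  have j'r: "j' < r" using rpos by (simp add: j'_def)
  have Lj': "L j' = v" by (simp add: j'_def v_def per)
  have gj': "GI (L j')" using g Lj' v_def by simp
  let ?Sv = "{stp L i | i. i < r \<and> L j' \<in> stp L i}"
  have memS: "\<And>i. i < r \<Longrightarrow> L j' \<in> stp L i \<Longrightarrow> stp L i \<in> ?Sv" by blast
  have A: "stp L j \<in> ?Sv" by (rule memS) (use jk Lj' in \<open>simp_all add: stp_def v_def\<close>)
  have B: "stp L k \<in> ?Sv" by (rule memS) (use jk Lj' eq in \<open>simp_all add: stp_def v_def\<close>)
  have C: "stp L (Suc j) \<in> ?Sv"
  proof -
    have "stp L (Suc j mod r) \<in> ?Sv" by (rule memS) (use rpos Lj' in \<open>simp_all add: stp_def v_def j'_def\<close>)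
    then show ?thesis using stp_mod[of "Suc j"] by simp
  qed
  have Dd: "stp L (Suc k) \<in> ?Sv"
  proof -
    have "stp L (Suc k mod r) \<in> ?Sv"
      by (rule memS) (use rpos Lj' eq in \<open>simp_all add: stp_def v_def per\<close>)
    then show ?thesis using stp_mod[of "Suc k"] by simp
  qed
  have sA: "stp L j = {v, v + e1/2}" using e by (auto simp: stp_def v_def)
  have sB: "stp L k = {v, v + e3/2}" using f eq by (auto simp: stp_def v_def)
  have sC: "stp L (Suc j) = {v, v + e2/2}" using e by (auto simp: stp_def v_def)
  have sD: "stp L (Suc k) = {v, v + e4/2}" using f eq by (auto simp: stp_def v_def)
  have fin: "finite ?Sv" by (rule finite_subset[of _ "stp L ` {..<r}"]) auto
  have d: "{v, v + e1/2} \<noteq> {v, v + e3/2}" "{v, v + e1/2} \<noteq> {v, v + e2/2}" "{v, v + e1/2} \<noteq> {v, v + e4/2}"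
     "{v, v + e3/2} \<noteq> {v, v + e2/2}" "{v, v + e3/2} \<noteq> {v, v + e4/2}" "{v, v + e2/2} \<noteq> {v, v + e4/2}"
    using dbl_eq[of e1 e3 v] dbl_eq[of e1 e2 v] dbl_eq[of e1 e4 v] dbl_eq[of e3 e2 v] dbl_eq[of e3 e4 v] dbl_eq[of e2 e4 v]
      13 14 23 24 e(5) f(5) nz by auto
  have "card {stp L j, stp L k, stp L (Suc j), stp L (Suc k)} = 4"
    unfolding sA sB sC sD using d by simp
  moreover have "{stp L j, stp L k, stp L (Suc j), stp L (Suc k)} \<subseteq> ?Sv" using A B C Dd by (simp only: insert_subset empty_subsetI)
  ultimately have "4 \<le> card ?Sv" using card_mono[OF fin] by (metis (no_types, lifting))
  then have "D j' = 4" using degb[OF j'r gj'] D4[OF j'r gj'] by simp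
  then have ncj: "L (j' + r - 1) + L (Suc j') \<noteq> 2 * L j'" using nc[OF j'r gj'] by simp
  have "(j' + r - 1) mod r = j mod r" using jk by (auto simp: j'_def Suc_mod_less)
  then have "L (j' + r - 1) = L j" by (metis per)
  moreover have "L (Suc j') = L (Suc (Suc j))" by (rule Lsuc_cong) (simp add: j'_def)
  ultimately have "L j + L (Suc (Suc j)) \<noteq> 2 * v" using ncj Lj' by simp
  then show "e1 + e2 \<noteq> 0"
  proof (rule contrapos_nn)
    assume "e1 + e2 = 0"
    then have "e2 = - e1" by (simp add: add_eq_0_iff)
    then show "L j + L (Suc (Suc j)) = 2 * v" unfolding e(3) e(4) v_def by simp
  qed
qed

end


lemma seg_param0:
  assumes "a + b = (1::complex)" "p = a * (v + x/4) + b * (v + y/4)"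
  shows "4 * (p - v) = a * x + b * y"
proof -
  have "4 * (p - v) = a * x + b * y + 4 * v * (a + b - 1)"
    unfolding assms(2) by (simp add: algebra_simps)
  then show ?thesis using assms(1) by simp
qed

lemma seg_param:
  assumes "p = of_real (1 - t) * (v + x/4) + of_real t * (v + y/4)"
  shows "4 * (p - v) = of_real (1 - t) * x + of_real t * (y::complex)"
  by (rule seg_param0[OF _ assms]) (simp add: of_real_diff)

lemma seg_param2:
  assumes "p = of_real (1 - t) * (u + e/4) + of_real t * (u + 3*e/4)"
  shows "p - u = of_real ((1 - t)/4 + 3*t/4) * (e::complex)"
proof -
  have h: "4 * (p - u) = of_real (1 - t) * e + of_real t * (3*e)"
    by (rule seg_param[of p t u e "3*e"]) (simp add: assms)
  have "p - u = (4 * (p - u)) / 4" by simp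
  also have "\<dots> = (of_real (1 - t) * e + of_real t * (3*e)) / 4" by (simp only: h)
  also have "\<dots> = of_real ((1 - t)/4 + 3*t/4) * e"
    by (simp add: field_simps)
  finally show ?thesis .
qed

context zloop begin

lemma int_vv:
  assumes jk: "j < r" "k < r" "j \<noteq> k" and g: "GI (L (Suc j))" "GI (L (Suc k))"
  shows "closed_segment (Q j) (Q (Suc j)) \<inter> closed_segment (Q k) (Q (Suc k)) = {}"
proof (cases "L (Suc j) = L (Suc k)")
  case False
  have "n1 (L (Suc j) - L (Suc k)) \<ge> 1" using GI_dist[OF g False] .
  moreover have "n1 (L (Suc j) - L (Suc k)) \<le> 1/2" if "p \<in> closed_segment (Q j) (Q (Suc j))" "p \<in> closed_segment (Q k) (Q (Suc k))" for p
    using nb_close[of p "L (Suc j)" "1/4" "L (Suc k)" "1/4"] S_nb[of j] S_nb[of k] that by auto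
  ultimately show ?thesis by force
next
  case eq: True
  obtain e1 e2 where e: "U4 e1" "U4 e2" "L j = L (Suc j) + e1/2" "L (Suc (Suc j)) = L (Suc j) + e2/2" "e1 \<noteq> e2"
    using corner_v[OF g(1)] by blast
  obtain e3 e4 where f: "U4 e3" "U4 e4" "L k = L (Suc k) + e3/2" "L (Suc (Suc k)) = L (Suc k) + e4/2" "e3 \<noteq> e4"
    using corner_v[OF g(2)] by blast
  note vt = visit_turn[OF jk g(1) eq e f]
  note vt2 = visit_turn[OF jk(2,1) jk(3)[symmetric] g(2) eq[symmetric] f e]
  define v where "v = L (Suc j)"
  have Qs1: "Q j = v + e1/4" unfolding Q_def e(3) v_def by (simp add: field_simps)
  have Qs2: "Q (Suc j) = v + e2/4" unfolding Q_def e(4) v_def by (simp add: field_simps)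
  have Qs3: "Q k = v + e3/4" unfolding Q_def f(3) v_def eq by (simp add: field_simps)
  have Qs4: "Q (Suc k) = v + e4/4" unfolding Q_def f(4) v_def eq by (simp add: field_simps)
  note Qs = Qs1 Qs2 Qs3 Qs4
  show ?thesis
  proof (rule ccontr)
    assume "closed_segment (Q j) (Q (Suc j)) \<inter> closed_segment (Q k) (Q (Suc k)) \<noteq> {}"
    then obtain p where p: "p \<in> closed_segment (Q j) (Q (Suc j))" "p \<in> closed_segment (Q k) (Q (Suc k))" by blast
    obtain t where t: "0 \<le> t" "t \<le> 1" "p = of_real (1 - t) * (v + e1/4) + of_real t * (v + e2/4)"
      using in_seg_E[OF p(1)] unfolding Qs by blast
    obtain s where s: "0 \<le> s" "s \<le> 1" "p = of_real (1 - s) * (v + e3/4) + of_real s * (v + e4/4)"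
      using in_seg_E[OF p(2)] unfolding Qs by blast
    have "of_real (1 - t) * e1 + of_real t * e2 = of_real (1 - s) * e3 + of_real s * e4"
      using seg_param[OF t(3)] seg_param[OF s(3)] by simp
    moreover have "of_real (1 - t) * e1 + of_real t * e2 \<noteq> of_real (1 - s) * e3 + of_real s * e4"
      by (rule chords_disjoint[OF e(1) e(2) f(1) f(2) e(5) vt(2) vt(3) vt(4) vt(5) f(5) vt(1) vt2(1) t(1) t(2) s(1) s(2)])
    ultimately show False by simp
  qed
qed

lemma int_vm:
  assumes g: "GI (L (Suc j))" "\<not> GI (L (Suc k))"
    and p: "p \<in> closed_segment (Q j) (Q (Suc j))" "p \<in> closed_segment (Q k) (Q (Suc k))"
  shows "p \<in> {Q j, Q (Suc j)} \<and> p \<in> {Q k, Q (Suc k)}"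
proof -
  obtain e1 e2 where e: "U4 e1" "U4 e2" "L j = L (Suc j) + e1/2" "L (Suc (Suc j)) = L (Suc j) + e2/2" "e1 \<noteq> e2"
    using corner_v[OF g(1)] by blast
  obtain u e where ue: "GI u" "U4 e" "L k = u" "L (Suc k) = u + e/2" "L (Suc (Suc k)) = u + e"
    using corner_m[OF g(2)] by blast
  define v where "v = L (Suc j)"
  have gv: "GI v" using g(1) by (simp add: v_def)
  have Qs1: "Q j = v + e1/4" unfolding Q_def e(3) v_def by (simp add: field_simps)
  have Qs2: "Q (Suc j) = v + e2/4" unfolding Q_def e(4) v_def by (simp add: field_simps)
  have Qs3: "Q k = u + e/4" unfolding Q_def ue(3) ue(4) by (simp add: field_simps)
  have Qs4: "Q (Suc k) = u + 3*e/4" unfolding Q_def ue(4) ue(5) by (simp add: field_simps)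
  note Qs = Qs1 Qs2 Qs3 Qs4
  have pv: "n1 (p - v) \<le> 1/4" using S_nb[of j] p(1) by (auto simp: nb_def v_def)
  have "n1 (v - (u + e/2)) \<le> 1/2"
    using nb_close[of p "L (Suc j)" "1/4" "L (Suc k)" "1/4"] S_nb[of j] S_nb[of k] p ue(4) by (auto simp: v_def)
  then have "n1 (v - (u + e/2)) < 3/2" by linarith
  then obtain f where f: "U4 f" "u + e/2 = v + f/2" using GI_half_close[OF gv ue(1,2)] by blast
  have hr: "(v = u \<and> f = e) \<or> (v = u + e \<and> f = -e)" using half_repr[OF ue(1) gv ue(2) f(1) f(2)] .
  obtain t where t: "0 \<le> t" "t \<le> 1" "p = of_real (1 - t) * (u + e/4) + of_real t * (u + 3*e/4)"
    using in_seg_E[OF p(2)] unfolding Qs3 Qs4 by blast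
  have pu: "p - u = of_real ((1 - t)/4 + 3*t/4) * e" using seg_param2[OF t(3)] .
  have pk: "p = v + f/4 \<and> p \<in> {Q k, Q (Suc k)}"
    using hr
  proof
    assume h: "v = u \<and> f = e"
    have "n1 (p - v) = n1 (of_real ((1 - t)/4 + 3*t/4) * e)" using pu h by metis
    also have "\<dots> = \<bar>(1 - t)/4 + 3*t/4\<bar>" by (rule n1_unit[OF ue(2)])
    finally have "n1 (p - v) = \<bar>(1 - t)/4 + 3*t/4\<bar>" .
    then have "\<bar>(1 - t)/4 + 3*t/4\<bar> \<le> 1/4" using pv by simp
    then have "t = 0" using t(1) by (simp add: abs_le_iff field_simps)
    then have "p = u + e/4" using t(3) by simp
    then show ?thesis using h Qs3 by simp
  next
    assume h: "v = u + e \<and> f = -e"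
    have "p - v = (p - u) - e" using h by simp
    also have "\<dots> = of_real ((1 - t)/4 + 3*t/4 - 1) * e" unfolding pu of_real_diff of_real_1 by (simp add: algebra_simps)
    finally have "n1 (p - v) = n1 (of_real ((1 - t)/4 + 3*t/4 - 1) * e)" by simp
    also have "\<dots> = \<bar>(1 - t)/4 + 3*t/4 - 1\<bar>" by (rule n1_unit[OF ue(2)])
    finally have "n1 (p - v) = \<bar>(1 - t)/4 + 3*t/4 - 1\<bar>" .
    then have "\<bar>(1 - t)/4 + 3*t/4 - 1\<bar> \<le> 1/4" using pv by simp
    then have "t = 1" using t(2) by (simp add: abs_le_iff field_simps)
    then have "p = u + 3*e/4" using t(3) by simp
    moreover have "u + 3*e/4 = v + f/4" using h by (simp add: field_simps)
    ultimately show ?thesis using Qs4 by simp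
  qed
  obtain t' where t': "0 \<le> t'" "t' \<le> 1" "p = of_real (1 - t') * (v + e1/4) + of_real t' * (v + e2/4)"
    using in_seg_E[OF p(1)] unfolding Qs1 Qs2 by blast
  have "4 * (p - v) = f" using pk by simp
  then have "of_real (1 - t') * e1 + of_real t' * e2 = f"
    using seg_param[OF t'(3)] by simp
  then have "f = e1 \<or> f = e2" using chord_unit[OF e(1,2) f(1) e(5) t'(1,2)] by simp
  then have "p \<in> {Q j, Q (Suc j)}" using pk Qs1 Qs2 by auto
  then show ?thesis using pk by blast
qed

lemma S_int:
  assumes jk: "j < r" "k < r" "j \<noteq> k"
    and p: "p \<in> closed_segment (Q j) (Q (Suc j))" "p \<in> closed_segment (Q k) (Q (Suc k))"
  shows "p \<in> {Q j, Q (Suc j)} \<and> p \<in> {Q k, Q (Suc k)}"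
proof (cases "GI (L (Suc j))"; cases "GI (L (Suc k))")
  assume "GI (L (Suc j))" "GI (L (Suc k))"
  then show ?thesis using int_vv[OF jk] p by blast
next
  assume "GI (L (Suc j))" "\<not> GI (L (Suc k))"
  then show ?thesis using int_vm p by blast
next
  assume "\<not> GI (L (Suc j))" "GI (L (Suc k))"
  then show ?thesis using int_vm[of k j p] p by blast
next
  assume "\<not> GI (L (Suc j))" "\<not> GI (L (Suc k))"
  then show ?thesis using int_mm[OF jk] p by blast
qed

lemma nbI: "z - c = d \<Longrightarrow> n1 d \<le> \<rho> \<Longrightarrow> z \<in> nb c \<rho>"
  by (simp add: nb_def)

lemma tri1: "\<exists>c. GI c \<and> L k \<in> nb c (3/4) \<and> Q k \<in> nb c (3/4) \<and> L (Suc k) \<in> nb c (3/4)"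
proof -
  from shape[of k] show ?thesis
  proof (elim disjE conjE exE)
    fix e assume h: "GI (L k)" "U4 e" "L (Suc k) = L k + e/2"
    have "Q k - L k = e/4" unfolding Q_def h(3) by (simp add: field_simps)
    then have "Q k \<in> nb (L k) (3/4)" by (rule nbI) (simp add: n1_q[OF h(2)])
    moreover have "L k \<in> nb (L k) (3/4)" by (rule nbI[of _ _ 0]) (simp_all add: n1_0)
    moreover have "L (Suc k) \<in> nb (L k) (3/4)" by (rule nbI[of _ _ "e/2"]) (simp_all add: h(3) n1_h[OF h(2)])
    ultimately have "L k \<in> nb (L k) (3/4) \<and> Q k \<in> nb (L k) (3/4) \<and> L (Suc k) \<in> nb (L k) (3/4)" by blast
    then show ?thesis using h(1) by blast
  next
    fix e assume h: "GI (L (Suc k))" "U4 e" "L k = L (Suc k) + e/2"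
    have "Q k - L (Suc k) = e/4" unfolding Q_def h(3) by (simp add: field_simps)
    then have "Q k \<in> nb (L (Suc k)) (3/4)" by (rule nbI) (simp add: n1_q[OF h(2)])
    moreover have "L (Suc k) \<in> nb (L (Suc k)) (3/4)" by (rule nbI[of _ _ 0]) (simp_all add: n1_0)
    moreover have "L k \<in> nb (L (Suc k)) (3/4)" by (rule nbI[of _ _ "e/2"]) (simp_all add: h(3) n1_h[OF h(2)])
    ultimately have "L k \<in> nb (L (Suc k)) (3/4) \<and> Q k \<in> nb (L (Suc k)) (3/4) \<and> L (Suc k) \<in> nb (L (Suc k)) (3/4)" by blast
    then show ?thesis using h(1) by blast
  qed
qed

lemma tri2: "\<exists>c. GI c \<and> Q k \<in> nb c (3/4) \<and> L (Suc k) \<in> nb c (3/4) \<and> Q (Suc k) \<in> nb c (3/4)"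
proof (cases "GI (L (Suc k))")
  case True
  then obtain e1 e2 where e: "U4 e1" "U4 e2" "L k = L (Suc k) + e1/2" "L (Suc (Suc k)) = L (Suc k) + e2/2"
    using corner_v by blast
  have d1: "Q k - L (Suc k) = e1/4" unfolding Q_def e(3) by (simp add: field_simps)
  have d2: "Q (Suc k) - L (Suc k) = e2/4" unfolding Q_def e(4) by (simp add: field_simps)
  have "Q k \<in> nb (L (Suc k)) (3/4)" by (rule nbI[OF d1]) (simp add: n1_q[OF e(1)])
  moreover have "L (Suc k) \<in> nb (L (Suc k)) (3/4)" by (rule nbI[of _ _ 0]) (simp_all add: n1_0)
  moreover have "Q (Suc k) \<in> nb (L (Suc k)) (3/4)" by (rule nbI[OF d2]) (simp add: n1_q[OF e(2)])
  ultimately show ?thesis using True by blast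
next
  case False
  then obtain u e where e: "GI u" "U4 e" "L k = u" "L (Suc k) = u + e/2" "L (Suc (Suc k)) = u + e"
    using corner_m by blast
  have d1: "Q k - u = e/4" unfolding Q_def e(3,4) by (simp add: field_simps)
  have d2: "Q (Suc k) - u = 3*e/4" unfolding Q_def e(4,5) by (simp add: field_simps)
  have d3: "L (Suc k) - u = e/2" using e(4) by simp
  have "Q k \<in> nb u (3/4)" by (rule nbI[OF d1]) (simp add: n1_q[OF e(2)])
  moreover have "L (Suc k) \<in> nb u (3/4)" by (rule nbI[OF d3]) (simp add: n1_h[OF e(2)])
  moreover have "Q (Suc k) \<in> nb u (3/4)" by (rule nbI[OF d2]) (simp add: n1_3q[OF e(2)])
  ultimately show ?thesis using e(1) by blast
qed

end


fun pg :: "(nat \<Rightarrow> complex) \<Rightarrow> nat \<Rightarrow> real \<Rightarrow> complex" where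
  "pg R 0 = linepath (R 0) (R 0)"
| "pg R (Suc 0) = linepath (R 0) (R 1)"
| "pg R (Suc (Suc n)) = linepath (R 0) (R 1) +++ pg (\<lambda>k. R (Suc k)) (Suc n)"

lemma pg_start: "pathstart (pg R n) = R 0"
  by (induction R n rule: pg.induct) (simp_all add: pathstart_def joinpaths_def linepath_def)

lemma pg_finish: "pathfinish (pg R n) = R n"
  by (induction R n rule: pg.induct) (simp_all add: pathfinish_def joinpaths_def linepath_def)

lemma pg_path: "path (pg R n)"
  by (induction R n rule: pg.induct) (auto simp: pg_start path_const)


lemma pg_image: "1 \<le> n \<Longrightarrow> path_image (pg R n) = (\<Union>k<n. closed_segment (R k) (R (Suc k)))"
proof (induction R n rule: pg.induct)
  case (1 R) then show ?case by simp
next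
  case (2 R) then show ?case by auto
next
  case (3 R n)
  have "path_image (pg R (Suc (Suc n))) = closed_segment (R 0) (R 1) \<union> (\<Union>k<Suc n. closed_segment (R (Suc k)) (R (Suc (Suc k))))"
    using "3.IH" by (simp add: path_image_join pg_start)
  also have "\<dots> = (\<Union>k<Suc (Suc n). closed_segment (R k) (R (Suc k)))"
    by (auto simp: less_Suc_eq_0_disj)
  finally show ?case .
qed

lemma pg_winding:
  "1 \<le> n \<Longrightarrow> a \<notin> path_image (pg R n) \<Longrightarrow> winding_number (pg R n) a = (\<Sum>k<n. Wn a (R k) (R (Suc k)))"
proof (induction R n rule: pg.induct)
  case (1 R) then show ?case by simp
next
  case (2 R) then show ?case by (simp add: Wn_def)
next
  case (3 R n)
  have a1: "a \<notin> closed_segment (R 0) (R 1)" and a2: "a \<notin> path_image (pg (\<lambda>k. R (Suc k)) (Suc n))"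
    using "3.prems" by (auto simp: path_image_join pg_start)
  have "winding_number (pg R (Suc (Suc n))) a = Wn a (R 0) (R 1) + winding_number (pg (\<lambda>k. R (Suc k)) (Suc n)) a"
    using a1 a2 by (simp add: winding_number_join pg_path pg_start Wn_def)
  also have "winding_number (pg (\<lambda>k. R (Suc k)) (Suc n)) a = (\<Sum>k<Suc n. Wn a (R (Suc k)) (R (Suc (Suc k))))"
    using "3.IH" a2 by simp
  finally show ?case by (simp only: sum.lessThan_Suc_shift[of _ "Suc n"]) simp
qed

lemma pg_arc:
  "1 \<le> n \<Longrightarrow> (\<forall>k<n. R k \<noteq> R (Suc k)) \<Longrightarrow>
   (\<forall>i j. i < j \<longrightarrow> j < n \<longrightarrow> closed_segment (R i) (R (Suc i)) \<inter> closed_segment (R j) (R (Suc j))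
        \<subseteq> (if j = Suc i then {R j} else {})) \<Longrightarrow> arc (pg R n)"
proof (induction R n rule: pg.induct)
  case (1 R) then show ?case by simp
next
  case (2 R) then show ?case by (simp add: arc_linepath)
next
  case (3 R n)
  let ?R' = "\<lambda>k. R (Suc k)"
  have arc1: "arc (linepath (R 0) (R 1))" using "3.prems"(2) by (auto simp: arc_linepath)
  have arc2: "arc (pg ?R' (Suc n))"
  proof (rule "3.IH")
    show "\<forall>k<Suc n. ?R' k \<noteq> ?R' (Suc k)" using "3.prems"(2) by auto
    show "\<forall>i j. i < j \<longrightarrow> j < Suc n \<longrightarrow> closed_segment (?R' i) (?R' (Suc i)) \<inter> closed_segment (?R' j) (?R' (Suc j))
        \<subseteq> (if j = Suc i then {?R' j} else {})"
    proof (intro allI impI)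
      fix i j assume "i < j" "j < Suc n"
      then show "closed_segment (?R' i) (?R' (Suc i)) \<inter> closed_segment (?R' j) (?R' (Suc j))
        \<subseteq> (if j = Suc i then {?R' j} else {})"
        using "3.prems"(3)[rule_format, of "Suc i" "Suc j"] by simp
    qed
  qed simp
  have int: "path_image (linepath (R 0) (R 1)) \<inter> path_image (pg ?R' (Suc n)) \<subseteq> {pathstart (pg ?R' (Suc n))}"
  proof -
    have "closed_segment (R 0) (R 1) \<inter> closed_segment (R (Suc k)) (R (Suc (Suc k))) \<subseteq> {R 1}" if "k < Suc n" for k
      using "3.prems"(3)[rule_format, of 0 "Suc k"] that by (auto split: if_splits)
    then show ?thesis by (auto simp: pg_image pg_start)
  qed
  show ?case by (simp only: pg.simps) (rule arc_join[OF arc1 arc2 _ int], simp add: pg_start)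
qed

lemma pg_simple:
  assumes r: "2 \<le> r" and Rr: "R r = R 0"
    and inj: "\<And>i j. i < r \<Longrightarrow> j < r \<Longrightarrow> R i = R j \<Longrightarrow> i = j"
    and seg: "\<And>i j. i < r \<Longrightarrow> j < r \<Longrightarrow> i \<noteq> j \<Longrightarrow>
       closed_segment (R i) (R (Suc i)) \<inter> closed_segment (R j) (R (Suc j)) \<subseteq> {R i, R (Suc i)} \<inter> {R j, R (Suc j)}"
  shows "simple_path (pg R r)"
proof -
  have inj2: "x = y \<or> (x = 0 \<and> y = r) \<or> (x = r \<and> y = 0)" if "x \<le> r" "y \<le> r" "R x = R y" for x y
  proof -
    have m: "R z = R (if z = r then 0 else z)" for z using Rr by simp
    have "(if x = r then 0 else x) = (if y = r then 0 else y)"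
      using inj[of "if x = r then 0 else x" "if y = r then 0 else y"] that m[of x] m[of y] r by auto
    then show ?thesis using that by (auto split: if_splits)
  qed
  obtain n where n: "r = Suc (Suc n)" using r by (metis add_2_eq_Suc le_Suc_ex)
  let ?R' = "\<lambda>k. R (Suc k)"
  have ne: "R k \<noteq> R (Suc k)" if "k < r" for k using inj2[of k "Suc k"] that r by auto
  have arc1: "arc (linepath (R 0) (R 1))" using ne[of 0] r by (auto simp: arc_linepath)
  have arc2: "arc (pg ?R' (Suc n))"
  proof (rule pg_arc)
    show "\<forall>k<Suc n. ?R' k \<noteq> ?R' (Suc k)" using ne n by auto
    show "\<forall>i j. i < j \<longrightarrow> j < Suc n \<longrightarrow> closed_segment (?R' i) (?R' (Suc i)) \<inter> closed_segment (?R' j) (?R' (Suc j))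
        \<subseteq> (if j = Suc i then {?R' j} else {})"
    proof (intro allI impI)
      fix i j assume ij: "i < j" "j < Suc n"
      have S: "closed_segment (?R' i) (?R' (Suc i)) \<inter> closed_segment (?R' j) (?R' (Suc j))
          \<subseteq> {R (Suc i), R (Suc (Suc i))} \<inter> {R (Suc j), R (Suc (Suc j))}"
        using seg[of "Suc i" "Suc j"] ij n by auto
      have "{R (Suc i), R (Suc (Suc i))} \<inter> {R (Suc j), R (Suc (Suc j))} \<subseteq> (if j = Suc i then {?R' j} else {})"
      proof
        fix p assume p: "p \<in> {R (Suc i), R (Suc (Suc i))} \<inter> {R (Suc j), R (Suc (Suc j))}"
        have "\<exists>x\<in>{Suc i, Suc (Suc i)}. p = R x" using p by blast
        then obtain x where x: "x \<in> {Suc i, Suc (Suc i)}" "p = R x" by blast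
        have "\<exists>y\<in>{Suc j, Suc (Suc j)}. p = R y" using p by blast
        then obtain y where y: "y \<in> {Suc j, Suc (Suc j)}" "p = R y" by blast
        note xy = x(1) y(1) x(2) y(2)
        have "x \<le> r" "y \<le> r" "x \<noteq> 0" "y \<noteq> 0" using xy(1,2) ij n by auto
        then have "x = y" using inj2[of x y] xy by auto
        then have "j = Suc i" "x = Suc j" using xy(1,2) ij by auto
        then show "p \<in> (if j = Suc i then {?R' j} else {})" using xy by simp
      qed
      with S show "closed_segment (?R' i) (?R' (Suc i)) \<inter> closed_segment (?R' j) (?R' (Suc j))
        \<subseteq> (if j = Suc i then {?R' j} else {})" by blast
    qed
  qed simp
  have int: "path_image (linepath (R 0) (R 1)) \<inter> path_image (pg ?R' (Suc n)) \<subseteq> {pathstart (linepath (R 0) (R 1)), pathstart (pg ?R' (Suc n))}"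
  proof -
    have "closed_segment (R 0) (R 1) \<inter> closed_segment (R (Suc k)) (R (Suc (Suc k))) \<subseteq> {R 0, R 1}" if "k < Suc n" for k
      using seg[of 0 "Suc k"] that n by auto
    then show ?thesis by (auto simp: pg_image pg_start)
  qed
  have "simple_path (linepath (R 0) (R 1) +++ pg ?R' (Suc n))"
    by (rule simple_path_join_loop[OF arc1 arc2 _ _ int]) (simp_all add: pg_start pg_finish n[symmetric] Rr)
  then show ?thesis by (simp add: n)
qed

lemma tri_W:
  assumes "convex S" "x \<in> S" "y \<in> S" "z \<in> S" "a \<notin> S"
  shows "Wn a x y + Wn a y z = Wn a x z"
proof -
  have sx: "closed_segment x y \<subseteq> S" "closed_segment y z \<subseteq> S" "closed_segment z x \<subseteq> S" "closed_segment x z \<subseteq> S"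
    using closed_segment_subset[OF assms(2) assms(3) assms(1)] closed_segment_subset[OF assms(3) assms(4) assms(1)]
      closed_segment_subset[OF assms(4) assms(2) assms(1)] closed_segment_subset[OF assms(2) assms(4) assms(1)] by auto
  then have n: "a \<notin> closed_segment x y" "a \<notin> closed_segment y z" "a \<notin> closed_segment z x" "a \<notin> closed_segment x z"
    using assms(5) by auto
  let ?g = "linepath x y +++ (linepath y z +++ linepath z x)"
  have "winding_number ?g a = 0"
    by (rule winding_number_zero_outside[OF _ assms(1) _ assms(5)]) (use sx in \<open>auto simp: path_image_join\<close>)
  moreover have "winding_number ?g a = Wn a x y + (Wn a y z + Wn a z x)"
    using n by (simp add: winding_number_join path_image_join Wn_def)
  moreover have "Wn a z x = - Wn a x z" using Wn_rev[OF n(4)] .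
  ultimately show ?thesis by (simp add: algebra_simps)
qed


definition zc :: "real \<Rightarrow> complex \<Rightarrow> complex \<Rightarrow> complex" where
  "zc \<delta> a z = (z - a) / (of_real \<delta> * (1 + \<i>)) + (1 + \<i>)/2"

lemma c0_nz: "\<delta> \<noteq> 0 \<Longrightarrow> of_real \<delta> * (1 + \<i>) \<noteq> 0"
  by (simp add: complex_eq_iff)

lemma zc_inj: "\<delta> \<noteq> 0 \<Longrightarrow> zc \<delta> a x = zc \<delta> a y \<Longrightarrow> x = y"
  using c0_nz[of \<delta>] by (simp add: zc_def divide_cancel_right)

lemma zc_comb: "\<alpha> + \<beta> = 1 \<Longrightarrow> zc \<delta> a (\<alpha> * x + \<beta> * y) = \<alpha> * zc \<delta> a x + \<beta> * zc \<delta> a y"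
proof -
  assume h: "\<alpha> + \<beta> = 1"
  then have b: "\<beta> = 1 - \<alpha>" by (simp add: algebra_simps)
  show ?thesis unfolding b zc_def divide_inverse by (simp add: algebra_simps) (simp add: field_simps)
qed

lemma zc_mid: "zc \<delta> a ((x + y)/2) = (zc \<delta> a x + zc \<delta> a y)/2"
  using zc_comb[of "1/2" "1/2" \<delta> a x y] by (simp add: field_simps)

lemma zc_a: "zc \<delta> a a = (1 + \<i>)/2" by (simp add: zc_def)

lemma zc_lin2: "\<delta> \<noteq> 0 \<Longrightarrow> zc \<delta> a x + zc \<delta> a y = 2 * zc \<delta> a z \<longleftrightarrow> x + y = 2 * z"
proof -
  assume d: "\<delta> \<noteq> 0"
  have "zc \<delta> a x + zc \<delta> a y - 2 * zc \<delta> a z = (x + y - 2 * z) / (of_real \<delta> * (1 + \<i>))"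
    unfolding zc_def divide_inverse by (simp add: algebra_simps)
  then show ?thesis using c0_nz[OF d] by (metis divide_eq_0_iff eq_iff_diff_eq_0)
qed

lemma zc_seg: "p \<in> closed_segment x y \<Longrightarrow> zc \<delta> a p \<in> closed_segment (zc \<delta> a x) (zc \<delta> a y)"
proof -
  assume "p \<in> closed_segment x y"
  then obtain t where t: "0 \<le> t" "t \<le> 1" "p = of_real (1 - t) * x + of_real t * y" by (rule in_seg_E)
  have "zc \<delta> a p = of_real (1 - t) * zc \<delta> a x + of_real t * zc \<delta> a y"
    unfolding t(3) by (rule zc_comb) (simp add: of_real_diff)
  then show ?thesis using t(1,2) unfolding closed_segment_def by (auto simp: scaleR_conv_of_real)
qed

definition zb :: "real \<Rightarrow> complex \<Rightarrow> complex \<Rightarrow> real \<Rightarrow> complex set" where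
  "zb \<delta> a c \<rho> = {z. zc \<delta> a z \<in> nb c \<rho>}"

lemma convex_zb: "convex (zb \<delta> a c \<rho>)"
  unfolding convex_alt
proof (intro ballI allI impI)
  fix x y :: complex and u :: real
  assume x: "x \<in> zb \<delta> a c \<rho>" and y: "y \<in> zb \<delta> a c \<rho>" and u: "0 \<le> u \<and> u \<le> 1"
  have "zc \<delta> a ((1 - u) *\<^sub>R x + u *\<^sub>R y) = of_real (1 - u) * zc \<delta> a x + of_real u * zc \<delta> a y"
    by (simp add: scaleR_conv_of_real zc_comb of_real_diff)
  also have "\<dots> = (1 - u) *\<^sub>R zc \<delta> a x + u *\<^sub>R zc \<delta> a y" by (simp add: scaleR_conv_of_real)
  also have "\<dots> \<in> nb c \<rho>"
    using convex_n1ball[of c \<rho>] x y u unfolding convex_alt zb_def nb_def by auto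
  finally show "(1 - u) *\<^sub>R x + u *\<^sub>R y \<in> zb \<delta> a c \<rho>" by (simp add: zb_def)
qed

lemma a_notin_zb: "GI c \<Longrightarrow> \<rho> < 1 \<Longrightarrow> a \<notin> zb \<delta> a c \<rho>"
  using GI_center[of c] by (auto simp: zb_def nb_def zc_a)

lemma GI_add: "GI x \<Longrightarrow> GI y \<Longrightarrow> GI (x + y)"
proof -
  assume "GI x" "GI y"
  then obtain a b c d :: int where "x = Complex (of_int a) (of_int b)" "y = Complex (of_int c) (of_int d)"
    by (auto simp: GI_def)
  then show "GI (x + y)" unfolding GI_def by (intro exI[of _ "a + c"] exI[of _ "b + d"]) (simp add: complex_eq_iff)
qed

lemma GI_1: "GI 1" unfolding GI_def by (intro exI[of _ 1] exI[of _ 0]) (simp add: complex_eq_iff)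
lemma GI_i: "GI \<i>" unfolding GI_def by (intro exI[of _ 0] exI[of _ 1]) (simp add: complex_eq_iff)


lemma U4_GI: "U4 e \<Longrightarrow> GI e"
  using GI_1 GI_i unfolding U4_def GI_def
  by (auto intro: exI[of _ "-1::int"] exI[of _ "0::int"] exI[of _ "1::int"] simp: complex_eq_iff)

lemma he_from_edge:
  assumes "GI (zc \<delta> a A)" "U4 (zc \<delta> a B - zc \<delta> a A)" "{u, v} = {A, B}"
  shows "HEz (zc \<delta> a ` {(u + v)/2, u})"
proof -
  let ?e = "zc \<delta> a B - zc \<delta> a A"
  from assms(3) have "(u = A \<and> v = B) \<or> (u = B \<and> v = A)" by (auto simp: doubleton_eq_iff)
  then show ?thesis
  proof
    assume h: "u = A \<and> v = B"
    have "zc \<delta> a ` {(u + v)/2, u} = {zc \<delta> a A + ?e/2, zc \<delta> a A}"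
      using h by (simp add: zc_mid field_simps)
    then show ?thesis unfolding HEz_def using assms(1,2) by blast
  next
    assume h: "u = B \<and> v = A"
    have g: "GI (zc \<delta> a B)" using GI_add[OF assms(1) U4_GI[OF assms(2)]] by simp
    have "zc \<delta> a ` {(u + v)/2, u} = {zc \<delta> a B + (- ?e)/2, zc \<delta> a B}"
      using h by (simp add: zc_mid field_simps)
    then show ?thesis unfolding HEz_def using g U4_neg[OF assms(2)] by blast
  qed
qed

lemma shift_div: "c \<noteq> 0 \<Longrightarrow> (x + c * w - a) / c = (x - a) / c + (w::complex)"
  by (simp add: field_simps)

lemma zc_shift: "\<delta> \<noteq> 0 \<Longrightarrow> zc \<delta> a (x + of_real \<delta> * (1 + \<i>) * w) = zc \<delta> a x + w"
  unfolding zc_def using shift_div[OF c0_nz, of \<delta> x w a] by (simp add: algebra_simps)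

lemma i_delta: "\<i> * of_real \<delta> = of_real \<delta> * (1 + \<i>) * ((1 + \<i>)/2)"
  by (simp add: field_simps algebra_simps)

lemma zc_base: "\<delta> \<noteq> 0 \<Longrightarrow> zc \<delta> a (a - \<i> * of_real \<delta>) = 0"
proof -
  assume d: "\<delta> \<noteq> 0"
  have eq: "a - \<i> * of_real \<delta> = a + of_real \<delta> * (1 + \<i>) * (- ((1 + \<i>)/2))"
    using i_delta[of \<delta>] by (simp add: algebra_simps)
  have "zc \<delta> a (a - \<i> * of_real \<delta>) = zc \<delta> a a + (- ((1 + \<i>)/2))"
    unfolding eq by (rule zc_shift[OF d])
  then show ?thesis by (simp add: zc_a)
qed

lemma zc_lat:
  assumes d: "\<delta> \<noteq> 0" and z: "lat_vertex \<delta> z" and a: "lat_vertex \<delta> (a - \<i> * of_real \<delta>)"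
  shows "GI (zc \<delta> a z)"
proof -
  obtain m k :: int where mk: "z = of_real \<delta> * (1 + \<i>) * (of_int m + \<i> * of_int k)" using z by (auto simp: lat_vertex_def)
  obtain m' k' :: int where mk': "a - \<i> * of_real \<delta> = of_real \<delta> * (1 + \<i>) * (of_int m' + \<i> * of_int k')"
    using a by (auto simp: lat_vertex_def)
  have "z = (a - \<i> * of_real \<delta>) + of_real \<delta> * (1 + \<i>) * (of_int (m - m') + \<i> * of_int (k - k'))"
    unfolding mk mk' by (simp add: algebra_simps)
  then have "zc \<delta> a z = of_int (m - m') + \<i> * of_int (k - k')"
    using zc_shift[OF d, of a "a - \<i> * of_real \<delta>"] zc_base[OF d, of a] by simp
  then show ?thesis unfolding GI_def by (intro exI[of _ "m - m'"] exI[of _ "k - k'"]) (simp add: complex_eq_iff)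
qed

lemma he_HEz:
  assumes d: "\<delta> \<noteq> 0" and F: "\<forall>c\<in>F. face_center \<delta> c" and aF: "a \<in> F" and h: "h \<in> half_edges \<delta> F"
  shows "HEz (zc \<delta> a ` h)"
proof -
  obtain u v where uv: "h = {(u + v)/2, u}" "{u, v} \<in> dom_edges \<delta> F" using h by (auto simp: half_edges_def)
  obtain c where c: "c \<in> F" "{u, v} \<in> face_edges \<delta> c" using uv(2) by (auto simp: dom_edges_def)
  have la: "lat_vertex \<delta> (a - \<i> * of_real \<delta>)" using F aF by (simp add: face_center_def)
  have lc: "lat_vertex \<delta> (c - \<i> * of_real \<delta>)" using F c(1) by (simp add: face_center_def)
  define p where "p = zc \<delta> a (c - \<i> * of_real \<delta>)"
  have gp: "GI p" unfolding p_def by (rule zc_lat[OF d lc la])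
  have e1: "c + of_real \<delta> = (c - \<i> * of_real \<delta>) + of_real \<delta> * (1 + \<i>) * 1" by (simp add: algebra_simps)
  have e2: "c + \<i> * of_real \<delta> = (c - \<i> * of_real \<delta>) + of_real \<delta> * (1 + \<i>) * (1 + \<i>)"
    by (simp add: algebra_simps)
  have e3: "c - of_real \<delta> = (c - \<i> * of_real \<delta>) + of_real \<delta> * (1 + \<i>) * \<i>" by (simp add: algebra_simps)
  have z1: "zc \<delta> a (c + of_real \<delta>) = p + 1" unfolding p_def by (subst e1, rule zc_shift[OF d])
  have z2: "zc \<delta> a (c + \<i> * of_real \<delta>) = p + (1 + \<i>)" unfolding p_def by (subst e2, rule zc_shift[OF d])
  have z3: "zc \<delta> a (c - of_real \<delta>) = p + \<i>" unfolding p_def by (subst e3, rule zc_shift[OF d])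
  have g1: "GI (p + 1)" "GI (p + (1 + \<i>))" "GI (p + \<i>)"
    using GI_add[OF gp GI_1] GI_add[OF gp GI_add[OF GI_1 GI_i]] GI_add[OF gp GI_i] by auto
  have U: "U4 1" "U4 (-1)" "U4 \<i>" "U4 (-\<i>)" by (simp_all add: U4_def)
  from c(2) consider "{u, v} = {c - \<i> * of_real \<delta>, c + of_real \<delta>}" | "{u, v} = {c + of_real \<delta>, c + \<i> * of_real \<delta>}"
    | "{u, v} = {c + \<i> * of_real \<delta>, c - of_real \<delta>}" | "{u, v} = {c - of_real \<delta>, c - \<i> * of_real \<delta>}"
    unfolding face_edges_def by blast
  then have "HEz (zc \<delta> a ` {(u + v)/2, u})"
  proof cases
    case 1 show ?thesis by (rule he_from_edge[OF _ _ 1]) (simp_all add: p_def[symmetric] z1 gp U)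
  next
    case 2 show ?thesis by (rule he_from_edge[OF _ _ 2]) (simp_all add: z1 z2 g1 U)
  next
    case 3 show ?thesis by (rule he_from_edge[OF _ _ 3]) (simp_all add: z2 z3 g1 U)
  next
    case 4 show ?thesis by (rule he_from_edge[OF _ _ 4]) (simp_all add: z3 p_def[symmetric] g1 U)
  qed
  then show ?thesis using uv(1) by simp
qed


lemma face_edges_finite: "finite (face_edges \<delta> c)" by (simp add: face_edges_def)

lemma face_edges_mem_finite: "M \<in> face_edges \<delta> c \<Longrightarrow> finite M"
  unfolding face_edges_def by (elim insertE) auto

lemma dom_edges_finite: "finite F \<Longrightarrow> finite (dom_edges \<delta> F)"
  unfolding dom_edges_def using face_edges_finite by simp

lemma dom_vertices_finite: "finite F \<Longrightarrow> finite (dom_vertices \<delta> F)"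
  unfolding dom_vertices_def
proof (rule finite_Union)
  assume "finite F" then show "finite (dom_edges \<delta> F)" by (rule dom_edges_finite)
  fix M assume "M \<in> dom_edges \<delta> F"
  then obtain c where "M \<in> face_edges \<delta> c" by (auto simp: dom_edges_def)
  then show "finite M" by (rule face_edges_mem_finite)
qed

lemma half_edges_finite: "finite F \<Longrightarrow> finite (half_edges \<delta> F)"
proof -
  assume F: "finite F"
  have "half_edges \<delta> F \<subseteq> (\<lambda>(u, v). {(u + v)/2, u}) ` (dom_vertices \<delta> F \<times> dom_vertices \<delta> F)"
  proof
    fix h assume "h \<in> half_edges \<delta> F"
    then obtain u v where uv: "h = {(u + v)/2, u}" "{u, v} \<in> dom_edges \<delta> F" unfolding half_edges_def by blast
    have "u \<in> dom_vertices \<delta> F" "v \<in> dom_vertices \<delta> F" using uv(2) unfolding dom_vertices_def by blast+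
    then show "h \<in> (\<lambda>(u, v). {(u + v)/2, u}) ` (dom_vertices \<delta> F \<times> dom_vertices \<delta> F)"
      using uv(1) by (intro image_eqI[of _ _ "(u, v)"]) auto
  qed
  moreover have "finite ((\<lambda>(u, v). {(u + v)/2, u}) ` (dom_vertices \<delta> F \<times> dom_vertices \<delta> F))"
    using dom_vertices_finite[OF F] by simp
  ultimately show ?thesis by (rule finite_subset)
qed

locale dom =
  fixes \<delta> :: real and F :: "complex set" and a :: complex
  assumes dpos: "\<delta> > 0" and fin: "finite F" and fc: "\<forall>c\<in>F. face_center \<delta> c" and aF: "a \<in> F"
begin

lemma dnz: "\<delta> \<noteq> 0" using dpos by simp

lemma HE: "h \<in> half_edges \<delta> F \<Longrightarrow> HEz (zc \<delta> a ` h)"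
  by (rule he_HEz[OF dnz fc aF])

lemma HE_E:
  assumes "h \<in> half_edges \<delta> F"
  obtains x y v e where "h = {x, y}" "zc \<delta> a x = v + e/2" "zc \<delta> a y = v" "GI v" "U4 e"
proof -
  obtain v e where ve: "GI v" "U4 e" "zc \<delta> a ` h = {v + e/2, v}" using HE[OF assms] by (auto simp: HEz_def)
  have i1: "v + e/2 \<in> zc \<delta> a ` h" and i2: "v \<in> zc \<delta> a ` h" using ve(3) by auto
  obtain x where x: "x \<in> h" "zc \<delta> a x = v + e/2" using i1 by (metis imageE)
  obtain y where y: "y \<in> h" "zc \<delta> a y = v" using i2 by (metis imageE)
  note xy = x y
  have "h = {x, y}"
  proof
    show "{x, y} \<subseteq> h" using xy by auto
    show "h \<subseteq> {x, y}"
    proof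
      fix z assume "z \<in> h"
      then have "zc \<delta> a z \<in> {v + e/2, v}" using ve(3) by blast
      then show "z \<in> {x, y}" using xy zc_inj[OF dnz, of a z x] zc_inj[OF dnz, of a z y] by auto
    qed
  qed
  then show ?thesis using that xy ve by blast
qed

lemma he_avoid: "h \<in> half_edges \<delta> F \<Longrightarrow> h = {x, y} \<Longrightarrow> a \<notin> closed_segment x y"
proof -
  assume h: "h \<in> half_edges \<delta> F" "h = {x, y}"
  obtain x' y' v e where E: "h = {x', y'}" "zc \<delta> a x' = v + e/2" "zc \<delta> a y' = v" "GI v" "U4 e"
    using HE_E[OF h(1)] by blast
  have "x' \<in> zb \<delta> a v (1/2)" "y' \<in> zb \<delta> a v (1/2)"
    using E n1_h[OF E(5)] n1_0 by (auto simp: zb_def nb_def)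
  then have "x \<in> zb \<delta> a v (1/2)" "y \<in> zb \<delta> a v (1/2)" using E(1) h(2) by (auto simp: doubleton_eq_iff)
  then have "closed_segment x y \<subseteq> zb \<delta> a v (1/2)" by (rule closed_segment_subset) (rule convex_zb)
  then show ?thesis using a_notin_zb[OF E(4), where \<rho>="1/2" and \<delta>=\<delta> and a=a] by auto
qed

lemma he_two: "h \<in> half_edges \<delta> F \<Longrightarrow> h \<noteq> {x}"
proof
  assume h: "h \<in> half_edges \<delta> F" "h = {x}"
  obtain x' y' v e where E: "h = {x', y'}" "zc \<delta> a x' = v + e/2" "zc \<delta> a y' = v" "GI v" "U4 e"
    using HE_E[OF h(1)] by blast
  have "x' = y'" using E(1) h(2) by auto
  then show False using E(2,3) U4_nz[OF E(5)] by simp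
qed

lemma deg_le4:
  assumes A: "A \<subseteq> half_edges \<delta> F" and g: "GI (zc \<delta> a v)"
  shows "card {h \<in> A. v \<in> h} \<le> 4"
proof -
  let ?S = "{h \<in> A. v \<in> h}"
  have inj: "inj_on ((`) (zc \<delta> a)) ?S"
  proof (rule inj_onI)
    fix h h' assume "zc \<delta> a ` h = zc \<delta> a ` h'"
    moreover have "inj (zc \<delta> a)" by (rule injI) (rule zc_inj[OF dnz])
    ultimately show "h = h'" by (simp add: inj_image_eq_iff)
  qed
  have sub: "(`) (zc \<delta> a) ` ?S \<subseteq> (\<lambda>e. {zc \<delta> a v + e/2, zc \<delta> a v}) ` {1, -1, \<i>, -\<i>}"
  proof
    fix H assume "H \<in> (`) (zc \<delta> a) ` ?S"
    then obtain h where h: "h \<in> A" "v \<in> h" "H = zc \<delta> a ` h" by blast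
    obtain x y w e where E: "h = {x, y}" "zc \<delta> a x = w + e/2" "zc \<delta> a y = w" "GI w" "U4 e"
      using HE_E[of h] A h(1) by blast
    have "zc \<delta> a v \<noteq> w + e/2" using g GI_not_half[OF E(4,5)] by auto
    then have "v \<noteq> x" using E(2) by auto
    then have "v = y" using h(2) E(1) by auto
    then have "H = {zc \<delta> a v + e/2, zc \<delta> a v}" using h(3) E by auto
    then show "H \<in> (\<lambda>e. {zc \<delta> a v + e/2, zc \<delta> a v}) ` {1, -1, \<i>, -\<i>}" using E(5) by (auto simp: U4_def)
  qed
  have "card ?S = card ((`) (zc \<delta> a) ` ?S)" using card_image[OF inj] by simp
  also have "\<dots> \<le> card ((\<lambda>e. {zc \<delta> a v + e/2, zc \<delta> a v}) ` {1, -1, \<i>, -\<i>})"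
    by (rule card_mono[OF _ sub]) simp
  also have "\<dots> \<le> card {1, -1, \<i>, -\<i> :: complex}" by (rule card_image_le) simp
  also have "\<dots> = 4" by (simp add: complex_eq_iff)
  finally show ?thesis .
qed

end

lemma polypath_image:
  "w \<noteq> [] \<Longrightarrow> path_image (polypath w) = insert (last w) (\<Union>k<length w - 1. closed_segment (w!k) (w!Suc k))"
proof (induction w rule: polypath.induct)
  case 1 then show ?case by simp
next
  case (2 p) then show ?case by simp
next
  case (3 p q rest)
  have "path_image (polypath (p # q # rest)) = closed_segment p q \<union> path_image (polypath (q # rest))"
    by (rule polypath_image_Cons2)
  also have "\<dots> = closed_segment p q \<union> insert (last (q # rest)) (\<Union>k<length (q#rest) - 1. closed_segment ((q#rest)!k) ((q#rest)!Suc k))"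
    using "3.IH" by simp
  also have "\<dots> = insert (last (p # q # rest)) (\<Union>k<length (p#q#rest) - 1. closed_segment ((p#q#rest)!k) ((p#q#rest)!Suc k))"
    by (auto simp: less_Suc_eq_0_disj)
  finally show ?case .
qed


lemma steps_length: "length (steps w) = length w - 1" by (simp add: steps_def)
lemma steps_nth: "k < length w - 1 \<Longrightarrow> steps w ! k = {w ! k, w ! Suc k}" by (simp add: steps_def)

context dom begin

theorem loop_wind:
  assumes A: "A \<subseteq> half_edges \<delta> F" and nl: "noncrossing_loop A l"
  shows "winding_number (polypath l) a \<in> {-1, 0, 1}"
proof -
  have tr: "trail_in A l" and hl: "hd l = last l" using nl by (auto simp: noncrossing_loop_def)
  have len: "2 \<le> length l" and ds: "distinct (steps l)" and sA: "set (steps l) \<subseteq> A"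
    using tr by (auto simp: trail_in_def)
  define r where "r = length l - 1"
  have r1: "1 \<le> r" using len by (simp add: r_def)
  have lne: "l \<noteq> []" using len by auto
  have lr: "l ! r = l ! 0" using hl lne by (simp add: r_def hd_conv_nth last_conv_nth)
  have stepA: "{l ! k, l ! Suc k} \<in> A" if "k < r" for k
  proof -
    have "steps l ! k \<in> set (steps l)" by (rule nth_mem) (use that in \<open>simp add: steps_length r_def\<close>)
    then show ?thesis using sA steps_nth[of k l] that by (auto simp: r_def)
  qed
  have stepH: "{l ! k, l ! Suc k} \<in> half_edges \<delta> F" if "k < r" for k using stepA[OF that] A by auto
  have finA: "finite A" using A half_edges_finite[OF fin] finite_subset by blast
  have sinj: "j = k" if "j < r" "k < r" "{l ! j, l ! Suc j} = {l ! k, l ! Suc k}" for j k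
  proof -
    have "steps l ! j = steps l ! k" using that steps_nth[of j l] steps_nth[of k l] by (simp add: r_def)
    then show ?thesis using ds that nth_eq_iff_index_eq[OF ds] by (simp add: r_def steps_length)
  qed
  have r3: "3 \<le> r"
  proof (rule ccontr)
    assume "\<not> 3 \<le> r"
    then have "r = 1 \<or> r = 2" using r1 by auto
    then show False
    proof
      assume "r = 1"
      then have "{l ! 0, l ! Suc 0} = {l ! 0}" using lr by simp
      moreover have "{l ! 0, l ! Suc 0} \<noteq> {l ! 0}" by (rule he_two[OF stepH]) (use \<open>r = 1\<close> in simp)
      ultimately show False by simp
    next
      assume r2: "r = 2"
      have "{l ! 1, l ! Suc 1} = {l ! 0, l ! Suc 0}" using lr r2 by (auto simp: numeral_2_eq_2)
      then show False using sinj[of 1 0] r2 by simp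
    qed
  qed
  have lmod: "l ! (Suc k mod r) = l ! Suc (k mod r)" for k
  proof (cases "Suc (k mod r) = r")
    case True then show ?thesis using lr by (simp add: mod_Suc)
  next
    case False then show ?thesis by (simp add: mod_Suc)
  qed
  define P where "P k = l ! (k mod r)" for k
  have PS: "P (Suc k) = l ! Suc (k mod r)" for k using lmod by (simp add: P_def)
  have Plt: "P k = l ! k" if "k < r" for k using that by (simp add: P_def)
  have PSlt: "P (Suc k) = l ! Suc k" if "k < r" for k using that PS by simp
  have Pstep: "{P k, P (Suc k)} \<in> A" for k
    using stepA[of "k mod r"] r1 lmod[of k] by (simp add: P_def)
  define L where "L k = zc \<delta> a (P k)" for k
  define D where "D j = deg A (l ! j)" for j
  interpret Z: zloop L r D
  proof
    show "3 \<le> r" by (rule r3)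
    show "L (k mod r) = L k" for k by (simp add: L_def P_def)
    show "HEz (stp L k)" for k
    proof -
      have "stp L k = zc \<delta> a ` {P k, P (Suc k)}" by (simp add: stp_def L_def)
      moreover have "HEz (zc \<delta> a ` {P k, P (Suc k)})" using HE Pstep[of k] A by blast
      ultimately show ?thesis by simp
    qed
    show "j = k" if "j < r" "k < r" "stp L j = stp L k" for j k
    proof -
      have "zc \<delta> a ` {P j, P (Suc j)} = zc \<delta> a ` {P k, P (Suc k)}" using that(3) by (simp add: stp_def L_def)
      moreover have "inj (zc \<delta> a)" by (rule injI) (rule zc_inj[OF dnz])
      ultimately have "{P j, P (Suc j)} = {P k, P (Suc k)}" by (metis inj_image_eq_iff)
      then show ?thesis using sinj that Plt PSlt by simp
    qed
    show "card {stp L i | i. i < r \<and> L j \<in> stp L i} \<le> D j" if "j < r" "GI (L j)" for j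
    proof -
      have "{stp L i | i. i < r \<and> L j \<in> stp L i} \<subseteq> (`) (zc \<delta> a) ` {h \<in> A. l ! j \<in> h}"
      proof
        fix H assume "H \<in> {stp L i | i. i < r \<and> L j \<in> stp L i}"
        then obtain i where i: "i < r" "L j \<in> stp L i" "H = stp L i" by blast
        have H: "H = zc \<delta> a ` {P i, P (Suc i)}" using i(3) by (simp add: stp_def L_def)
        have "zc \<delta> a (l ! j) \<in> zc \<delta> a ` {P i, P (Suc i)}" using i(2) that(1) Plt by (simp add: stp_def L_def)
        then have "l ! j \<in> {P i, P (Suc i)}" using zc_inj[OF dnz] by blast
        then show "H \<in> (`) (zc \<delta> a) ` {h \<in> A. l ! j \<in> h}" using H Pstep[of i] by blast
      qed
      then have "card {stp L i | i. i < r \<and> L j \<in> stp L i} \<le> card ((`) (zc \<delta> a) ` {h \<in> A. l ! j \<in> h})"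
        by (rule card_mono[rotated]) (use finA in simp)
      also have "\<dots> \<le> card {h \<in> A. l ! j \<in> h}" by (rule card_image_le) (use finA in simp)
      finally show ?thesis by (simp add: D_def deg_def)
    qed
    show "D j \<le> 4" if "j < r" "GI (L j)" for j
      unfolding D_def deg_def by (rule deg_le4[OF A]) (use that Plt in \<open>simp add: L_def\<close>)
    show "L (j + r - 1) + L (Suc j) \<noteq> 2 * L j" if "j < r" "GI (L j)" "D j = 4" for j
    proof -
      have "\<forall>k < length l - 1. deg A (l ! k) = 4 \<longrightarrow>
              l ! (if k = 0 then length l - 1 - 1 else k - 1) + l ! Suc k \<noteq> 2 * l ! k"
        using nl unfolding noncrossing_loop_def Let_def by blast
      then have h0: "deg A (l ! j) = 4 \<longrightarrow> l ! (if j = 0 then length l - 1 - 1 else j - 1) + l ! Suc j \<noteq> 2 * l ! j"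
        using that(1) unfolding r_def by blast
      have eqr: "length l - 1 - 1 = r - 1" by (simp add: r_def)
      have h: "l ! (if j = 0 then r - 1 else j - 1) + l ! Suc j \<noteq> 2 * l ! j"
        using h0 that(3) unfolding D_def eqr by blast
      have m: "(j + r - 1) mod r = (if j = 0 then r - 1 else j - 1)"
      proof (cases "j = 0")
        case True then show ?thesis using r1 by simp
      next
        case False
        then have e: "j + r - 1 = (j - 1) + r" by simp
        have "(j + r - 1) mod r = j - 1" unfolding e using that(1) by simp
        then show ?thesis using False by simp
      qed
      have "L (j + r - 1) = zc \<delta> a (l ! (if j = 0 then r - 1 else j - 1))" unfolding L_def P_def m by (rule refl)
      moreover have "L (Suc j) = zc \<delta> a (l ! Suc j)" using PSlt[OF that(1)] by (simp add: L_def)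
      moreover have "L j = zc \<delta> a (l ! j)" using Plt[OF that(1)] by (simp add: L_def)
      ultimately show ?thesis using h zc_lin2[OF dnz] by simp
    qed
  qed
  define R where "R k = (P k + P (Suc k)) / 2" for k
  have zcR: "zc \<delta> a (R k) = Z.Q k" for k by (simp add: R_def Z.Q_def L_def zc_mid)
  have Pr: "P r = P 0" using lr by (simp add: P_def)
  have "Suc r mod r = Suc 0 mod r" using mod_Suc_eq[of r r] by simp
  then have PSr: "P (Suc r) = P (Suc 0)" unfolding P_def by metis
  have Rr: "R r = R 0" by (simp add: R_def Pr PSr)
  have aP: "a \<notin> closed_segment (P k) (P (Suc k))" for k by (rule he_avoid[OF _ refl]) (use Pstep A in auto)
  have T1: "Wn a (P k) (R k) + Wn a (R k) (P (Suc k)) = Wn a (P k) (P (Suc k))" for k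
  proof -
    obtain c where c: "GI c" "L k \<in> nb c (3/4)" "Z.Q k \<in> nb c (3/4)" "L (Suc k) \<in> nb c (3/4)" using Z.tri1 by blast
    show ?thesis
    proof (rule tri_W[OF convex_zb])
      show "P k \<in> zb \<delta> a c (3/4)" "R k \<in> zb \<delta> a c (3/4)" "P (Suc k) \<in> zb \<delta> a c (3/4)"
        using c zcR[of k] by (simp_all add: zb_def L_def)
      show "a \<notin> zb \<delta> a c (3/4)" by (rule a_notin_zb[OF c(1)]) simp
    qed
  qed
  have T2: "Wn a (R k) (P (Suc k)) + Wn a (P (Suc k)) (R (Suc k)) = Wn a (R k) (R (Suc k))"
    and T2a: "a \<notin> closed_segment (R k) (R (Suc k))" for k
  proof -
    obtain c where c: "GI c" "Z.Q k \<in> nb c (3/4)" "L (Suc k) \<in> nb c (3/4)" "Z.Q (Suc k) \<in> nb c (3/4)" using Z.tri2 by blast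
    have m: "R k \<in> zb \<delta> a c (3/4)" "P (Suc k) \<in> zb \<delta> a c (3/4)" "R (Suc k) \<in> zb \<delta> a c (3/4)"
      using c zcR[of k] zcR[of "Suc k"] by (simp_all add: zb_def L_def)
    have na: "a \<notin> zb \<delta> a c (3/4)" by (rule a_notin_zb[OF c(1)]) simp
    show "Wn a (R k) (P (Suc k)) + Wn a (P (Suc k)) (R (Suc k)) = Wn a (R k) (R (Suc k))"
      by (rule tri_W[OF convex_zb m na])
    have "closed_segment (R k) (R (Suc k)) \<subseteq> zb \<delta> a c (3/4)"
      by (rule closed_segment_subset[OF m(1) m(3) convex_zb])
    then show "a \<notin> closed_segment (R k) (R (Suc k))" using na by auto
  qed
  have W0: "winding_number (polypath l) a = (\<Sum>k<r. Wn a (P k) (P (Suc k)))"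
  proof -
    have segs: "a \<notin> closed_segment (l ! k) (l ! Suc k)" if "k < r" for k
      using aP[of k] Plt[OF that] PSlt[OF that] by simp
    have "a \<noteq> P 0" using aP[of 0] ends_in_segment(1)[of "P 0" "P (Suc 0)"] by auto
    moreover have "P 0 = last l" using hl lne by (simp add: P_def hd_conv_nth)
    ultimately have "a \<noteq> last l" by simp
    then have "a \<notin> path_image (polypath l)" using segs by (auto simp: polypath_image[OF lne] r_def)
    then have "winding_number (polypath l) a = (\<Sum>k<r. winding_number (linepath (l ! k) (l ! Suc k)) a)"
      using winding_polypath[OF lne] by (simp add: r_def)
    also have "\<dots> = (\<Sum>k<r. Wn a (P k) (P (Suc k)))"
      by (rule sum.cong) (simp_all add: Wn_def Plt PSlt)
    finally show ?thesis .
  qed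
  have shift: "(\<Sum>k<r. Wn a (P (Suc k)) (R (Suc k))) = (\<Sum>k<r. Wn a (P k) (R k))"
  proof -
    have "(\<Sum>k<Suc r. Wn a (P k) (R k)) = Wn a (P 0) (R 0) + (\<Sum>k<r. Wn a (P (Suc k)) (R (Suc k)))"
      by (rule sum.lessThan_Suc_shift)
    moreover have "(\<Sum>k<Suc r. Wn a (P k) (R k)) = (\<Sum>k<r. Wn a (P k) (R k)) + Wn a (P r) (R r)" by simp
    ultimately show ?thesis using Pr Rr by simp
  qed
  have Wsum: "winding_number (polypath l) a = (\<Sum>k<r. Wn a (R k) (R (Suc k)))"
  proof -
    have "(\<Sum>k<r. Wn a (P k) (P (Suc k))) = (\<Sum>k<r. Wn a (P k) (R k)) + (\<Sum>k<r. Wn a (R k) (P (Suc k)))"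
      by (simp add: T1[symmetric] sum.distrib)
    also have "\<dots> = (\<Sum>k<r. Wn a (R k) (P (Suc k))) + (\<Sum>k<r. Wn a (P (Suc k)) (R (Suc k)))"
      using shift by simp
    also have "\<dots> = (\<Sum>k<r. Wn a (R k) (R (Suc k)))" by (simp add: T2[symmetric] sum.distrib)
    finally show ?thesis using W0 by simp
  qed
  have apg: "a \<notin> path_image (pg R r)" using T2a r1 by (auto simp: pg_image)
  have Wpg: "winding_number (pg R r) a = winding_number (polypath l) a"
    using pg_winding[OF r1 apg] Wsum by simp
  have simp_pg: "simple_path (pg R r)"
  proof (rule pg_simple)
    show "2 \<le> r" using r3 by simp
    show "R r = R 0" by (rule Rr)
    show "i = j" if "i < r" "j < r" "R i = R j" for i j
      using Z.Q_inj[OF that(1,2)] zcR[of i] zcR[of j] that(3) by simp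
    show "closed_segment (R i) (R (Suc i)) \<inter> closed_segment (R j) (R (Suc j)) \<subseteq> {R i, R (Suc i)} \<inter> {R j, R (Suc j)}"
      if "i < r" "j < r" "i \<noteq> j" for i j
    proof
      fix p assume p: "p \<in> closed_segment (R i) (R (Suc i)) \<inter> closed_segment (R j) (R (Suc j))"
      have "zc \<delta> a p \<in> closed_segment (Z.Q i) (Z.Q (Suc i))" "zc \<delta> a p \<in> closed_segment (Z.Q j) (Z.Q (Suc j))"
        using zc_seg[of p "R i" "R (Suc i)" \<delta> a] zc_seg[of p "R j" "R (Suc j)" \<delta> a] p by (simp_all add: zcR)
      then have "zc \<delta> a p \<in> {Z.Q i, Z.Q (Suc i)} \<and> zc \<delta> a p \<in> {Z.Q j, Z.Q (Suc j)}"
        using Z.S_int[OF that] by blast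
      then show "p \<in> {R i, R (Suc i)} \<inter> {R j, R (Suc j)}"
        using zc_inj[OF dnz, of a p] zcR by auto
    qed
  qed
  have "winding_number (pg R r) a \<in> {-1, 0, 1}"
    by (rule simple_closed_path_winding_number_cases[OF simp_pg _ apg]) (simp add: pg_start pg_finish Rr)
  then show ?thesis using Wpg by simp
qed

end


lemma neg1_pow_filter:
  "(complex_of_int ((-1) ^ length (filter P xs))) = prod_list (map (\<lambda>x. if P x then -1 else 1) xs)"
  by (induction xs) auto

lemma prod_list_map_nth: "prod_list (map f xs) = (\<Prod>i<length xs. f (xs ! i))"
  by (induction xs) (simp_all add: prod.lessThan_Suc_shift del: prod.lessThan_Suc)

lemma endpoints_prod:
  fixes f :: "complex \<Rightarrow> complex"
  assumes adm: "admissible \<delta> F b n \<gamma> ws" and inj: "inj_on b {..<2*n}"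
  shows "(\<Prod>i<n. f (hd (ws!i)) * f (last (ws!i))) = (\<Prod>j<2*n. f (b j))"
proof -
  define E where "E = {..<n} \<times> {False, True}"
  define ep where "ep x = (if snd x then last (ws ! fst x) else hd (ws ! fst x))" for x
  have A1: "\<forall>i<n. hd (ws ! i) \<in> b ` {..<2*n} \<and> last (ws ! i) \<in> b ` {..<2*n} \<and> hd (ws ! i) \<noteq> last (ws ! i)"
    using adm by (auto simp: admissible_def)
  have A2: "\<forall>j<2*n. \<exists>!i. i < n \<and> (b j = hd (ws ! i) \<or> b j = last (ws ! i))"
    using adm by (simp add: admissible_def)
  have injep: "inj_on ep E"
  proof (rule inj_onI)
    fix x y assume x: "x \<in> E" and y: "y \<in> E" and e: "ep x = ep y"
    have "ep x \<in> b ` {..<2*n}" using x A1 by (auto simp: E_def ep_def)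
    then obtain j where j: "j < 2*n" "b j = ep x" by auto
    have "fst x < n" "fst y < n" using x y by (auto simp: E_def)
    moreover have "b j = hd (ws ! fst x) \<or> b j = last (ws ! fst x)" using j by (auto simp: ep_def split: if_splits)
    moreover have "b j = hd (ws ! fst y) \<or> b j = last (ws ! fst y)" using j e by (auto simp: ep_def split: if_splits)
    ultimately have fx: "fst x = fst y" using A2 j(1) by blast
    show "x = y"
    proof (rule ccontr)
      assume "x \<noteq> y"
      then have "snd x \<noteq> snd y" using fx by (simp add: prod_eq_iff)
      then have "hd (ws ! fst x) = last (ws ! fst x)" using e fx by (auto simp: ep_def split: if_splits)
      then show False using A1 \<open>fst x < n\<close> by blast
    qed
  qed
  have "(\<Prod>i<n. f (hd (ws!i)) * f (last (ws!i))) = (\<Prod>i<n. \<Prod>s\<in>{False, True}. f (ep (i, s)))"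
    by (simp add: ep_def mult.commute)
  also have "\<dots> = (\<Prod>x\<in>E. f (ep x))"
    unfolding E_def by (subst prod.cartesian_product) (simp add: case_prod_beta)
  also have "\<dots> = prod f (ep ` E)"
    using prod.reindex[OF injep, of f] by simp
  also have "ep ` E = b ` {..<2*n}"
  proof (rule card_subset_eq)
    show "finite (b ` {..<2*n})" by simp
    show "ep ` E \<subseteq> b ` {..<2*n}" using A1 by (auto simp: E_def ep_def)
    have "card (ep ` E) = card E" using injep by (rule card_image)
    also have "\<dots> = 2 * n" by (simp add: E_def card_cartesian_product)
    also have "\<dots> = card (b ` {..<2*n})" using card_image[OF inj] by simp
    finally show "card (ep ` E) = card (b ` {..<2*n})" .
  qed
  also have "prod f (b ` {..<2*n}) = (\<Prod>j<2*n. f (b j))" using prod.reindex[OF inj] by simp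
  finally show ?thesis .
qed


context dom begin

lemma trail_facts:
  assumes A: "A \<subseteq> half_edges \<delta> F" and tr: "trail_in A w"
  shows "w \<noteq> []" and "a \<notin> set w" and "a \<notin> path_image (polypath w)"
    and "exp (pi * \<i> * winding_number (polypath w) a) * rt a (hd w) = prod (sigs a) (set (steps w)) * rt a (last w)"
    and "pm1 (prod (sigs a) (set (steps w)))"
proof -
  have len: "2 \<le> length w" and ds: "distinct (steps w)" and sA: "set (steps w) \<subseteq> A"
    using tr by (auto simp: trail_in_def)
  show wne: "w \<noteq> []" using len by auto
  have stepH: "{w ! k, w ! Suc k} \<in> half_edges \<delta> F" if "k < length w - 1" for k
  proof -
    have "steps w ! k \<in> set (steps w)" by (rule nth_mem) (use that in \<open>simp add: steps_length\<close>)
    then show ?thesis using sA A steps_nth[OF that] by auto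
  qed
  have seg: "a \<notin> closed_segment (w ! k) (w ! Suc k)" if "k < length w - 1" for k
    by (rule he_avoid[OF stepH[OF that] refl])
  show aset: "a \<notin> set w"
  proof
    assume "a \<in> set w"
    then obtain k where k: "k < length w" "w ! k = a" by (auto simp: in_set_conv_nth)
    show False
    proof (cases "k < length w - 1")
      case True then show False using seg[OF True] k(2) ends_in_segment(1)[of "w ! k" "w ! Suc k"] by simp
    next
      case False
      then have "k - 1 < length w - 1" "Suc (k - 1) = k" using k(1) len by auto
      then show False using seg[of "k - 1"] k(2) ends_in_segment(2)[of "w ! (k - 1)" "w ! k"] by simp
    qed
  qed
  show apath: "a \<notin> path_image (polypath w)"
    using seg aset last_in_set[OF wne] by (auto simp: polypath_image[OF wne])
  have W: "winding_number (polypath w) a = (\<Sum>k<length w - 1. Wn a (w ! k) (w ! Suc k))"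
    using winding_polypath[OF wne apath] by (simp add: Wn_def)
  have E: "exp (pi * \<i> * winding_number (polypath w) a) = (\<Prod>k<length w - 1. exp (pi * \<i> * Wn a (w ! k) (w ! Suc k)))"
    unfolding W sum_distrib_left by (rule exp_sum) simp
  have X: "(\<Prod>k<length w - 1. sig a (w ! k) (w ! Suc k)) = prod (sigs a) (set (steps w))"
  proof -
    have "(\<Prod>k<length w - 1. sig a (w ! k) (w ! Suc k)) = (\<Prod>k<length w - 1. sigs a (steps w ! k))"
      by (rule prod.cong) (simp_all add: steps_nth sigs_eq seg)
    also have "\<dots> = prod_list (map (sigs a) (steps w))" by (simp add: prod_list_map_nth steps_length)
    also have "\<dots> = prod (sigs a) (set (steps w))" by (simp add: prod.distinct_set_conv_list[OF ds])
    finally show ?thesis .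
  qed
  show "exp (pi * \<i> * winding_number (polypath w) a) * rt a (hd w) = prod (sigs a) (set (steps w)) * rt a (last w)"
    unfolding E X[symmetric] by (rule telescope[OF wne _ aset]) (use seg in blast)
  show "pm1 (prod (sigs a) (set (steps w)))"
  proof (rule pm1_prod)
    fix h assume "h \<in> set (steps w)"
    then obtain k where k: "k < length w - 1" "h = steps w ! k" by (auto simp: in_set_conv_nth steps_length)
    then have "h = {w ! k, w ! Suc k}" by (simp add: steps_nth)
    then show "pm1 (sigs a h)" using sigs_eq[OF seg[OF k(1)]] sig_pm1[OF seg[OF k(1)]] by simp
  qed
qed

lemma eps_pm1: assumes "(hat z)^2 = z - a" "z \<noteq> a" shows "pm1 (hat z / rt a z)"
proof -
  have "(hat z / rt a z)^2 = (z - a) / (z - a)" using assms(1) by (simp add: power_divide rt_sq)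
  then show ?thesis using assms(2) by (simp add: pm1_iff_sq)
qed

lemma walk_sheet:
  assumes A: "A \<subseteq> half_edges \<delta> F" and tr: "trail_in A w"
    and hh: "(hat (hd w))^2 = hd w - a" and hl: "(hat (last w))^2 = last w - a"
  shows "complex_of_int (sheet a hat w) = (hat (hd w) / rt a (hd w)) * (hat (last w) / rt a (last w)) * prod (sigs a) (set (steps w))"
proof -
  note tf = trail_facts[OF A tr]
  define eh where "eh = hat (hd w) / rt a (hd w)"
  define el where "el = hat (last w) / rt a (last w)"
  define X where "X = prod (sigs a) (set (steps w))"
  define W where "W = winding_number (polypath w) a"
  have hda: "hd w \<noteq> a" using tf(1,2) hd_in_set by metis
  have lda: "last w \<noteq> a" using tf(1,2) last_in_set by metis
  have rh: "rt a (hd w) \<noteq> 0" using rt_nz[OF hda] .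
  have rl: "rt a (last w) \<noteq> 0" using rt_nz[OF lda] .
  have peh: "pm1 eh" unfolding eh_def by (rule eps_pm1[where hat=hat and z="hd w", OF hh hda])
  have pel: "pm1 el" unfolding el_def by (rule eps_pm1[where hat=hat and z="last w", OF hl lda])
  have pX: "pm1 X" unfolding X_def by (rule tf(5))
  have tel: "exp (pi * \<i> * W) * rt a (hd w) = X * rt a (last w)" unfolding W_def X_def by (rule tf(4))
  have "hat (hd w) * exp (pi * \<i> * W) = eh * (exp (pi * \<i> * W) * rt a (hd w))"
    using rh by (simp add: eh_def)
  also have "\<dots> = eh * X * rt a (last w)" by (simp add: tel)
  finally have c1: "hat (hd w) * exp (pi * \<i> * W) = eh * X * rt a (last w)" .
  have c2: "hat (last w) = el * rt a (last w)" using rl by (simp add: el_def)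
  have "(hat (hd w) * exp (pi * \<i> * W) = hat (last w)) \<longleftrightarrow> eh * X = el"
    unfolding c1 c2 using rl by simp
  also have "\<dots> \<longleftrightarrow> eh * el * X = 1"
  proof
    assume "eh * X = el" then show "eh * el * X = 1" using pm1_sq[OF pel] by (metis mult.assoc mult.commute)
  next
    assume h: "eh * el * X = 1"
    have "eh * X = eh * X * (el * el)" using pm1_sq[OF pel] by simp
    also have "\<dots> = (eh * el * X) * el" by (simp add: algebra_simps)
    finally show "eh * X = el" using h by simp
  qed
  finally have cond: "(hat (hd w) * exp (pi * \<i> * W) = hat (last w)) \<longleftrightarrow> eh * el * X = 1" .
  have "sheet a hat w = (if eh * el * X = 1 then 1 else -1)"
    using sheet_char[where hat=hat and w=w and a=a, OF tf(1) tf(3) hh] cond by (simp add: W_def)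
  moreover have "pm1 (eh * el * X)" using peh pel pX by (intro pm1_mult)
  ultimately show ?thesis unfolding eh_def[symmetric] el_def[symmetric] X_def[symmetric] by (auto simp: pm1_def)
qed

lemma loop_sign:
  assumes A: "A \<subseteq> half_edges \<delta> F" and nl: "noncrossing_loop A l"
  shows "(if winding_number (polypath l) a \<noteq> 0 then -1 else 1) = prod (sigs a) (set (steps l))"
proof -
  have tr: "trail_in A l" and hl: "hd l = last l" using nl by (auto simp: noncrossing_loop_def)
  note tf = trail_facts[OF A tr]
  define W where "W = winding_number (polypath l) a"
  have hda: "hd l \<noteq> a" using tf(1,2) hd_in_set by metis
  have "exp (pi * \<i> * W) * rt a (hd l) = prod (sigs a) (set (steps l)) * rt a (hd l)"
    using tf(4) hl by (simp add: W_def)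
  then have e: "exp (pi * \<i> * W) = prod (sigs a) (set (steps l))" using rt_nz[OF hda] by simp
  have "W \<in> {-1, 0, 1}" unfolding W_def by (rule loop_wind[OF A nl])
  then have "(if W \<noteq> 0 then -1 else 1) = exp (pi * \<i> * W)"
  proof (elim insertE)
    assume w: "W = -1"
    have "exp (pi * \<i> * W) = exp (- (of_real pi * \<i>))" using w by simp
    also have "\<dots> = inverse (exp (of_real pi * \<i>))" by (rule exp_minus)
    also have "\<dots> = -1" by simp
    finally show ?thesis using w by simp
  qed (auto simp: mult.commute)
  then show ?thesis using e by (simp add: W_def)
qed

end


context dom begin

lemma main_side:
  assumes cfg: "config \<delta> F b n \<gamma>" and adm: "admissible \<delta> F b n \<gamma> ws" and ld: "loop_decomp (remainder \<gamma> ws) L"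
    and inj: "inj_on b {..<2*n}" and hb: "\<forall>j<2*n. (hat (b j))^2 = b j - a"
  shows "complex_of_int ((-1::int) ^ loops_around a L * (\<Prod>i<n. sheet a hat (ws ! i)))
       = (\<Prod>j<2*n. hat (b j) / rt a (b j)) * prod (sigs a) \<gamma>"
proof -
  define eps where "eps z = hat z / rt a z" for z
  have gH: "\<gamma> \<subseteq> half_edges \<delta> F" using cfg by (simp add: config_def)
  have fing: "finite \<gamma>" using gH half_edges_finite[OF fin] finite_subset by blast
  have lenws: "length ws = n" using adm by (simp add: admissible_def)
  have trw: "trail_in \<gamma> (ws ! i)" and hdb: "hd (ws ! i) \<in> b ` {..<2*n}" and lab: "last (ws ! i) \<in> b ` {..<2*n}"
    if "i < n" for i using adm that by (auto simp: admissible_def)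
  have disj: "set (steps (ws ! i)) \<inter> set (steps (ws ! i')) = {}" if "i < n" "i' < n" "i \<noteq> i'" for i i'
    using adm that by (auto simp: admissible_def)
  define X where "X i = prod (sigs a) (set (steps (ws ! i)))" for i
  define U where "U = (\<Union>i<n. set (steps (ws ! i)))"
  have hbh: "(hat (hd (ws ! i)))^2 = hd (ws ! i) - a" "(hat (last (ws ! i)))^2 = last (ws ! i) - a" if "i < n" for i
    using hdb[OF that] lab[OF that] hb by auto
  have sh: "complex_of_int (sheet a hat (ws ! i)) = eps (hd (ws ! i)) * eps (last (ws ! i)) * X i" if "i < n" for i
    unfolding eps_def X_def by (rule walk_sheet[OF gH trw[OF that] hbh[OF that]])
  have P1: "complex_of_int (\<Prod>i<n. sheet a hat (ws ! i)) = (\<Prod>j<2*n. eps (b j)) * prod (sigs a) U"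
  proof -
    have "complex_of_int (\<Prod>i<n. sheet a hat (ws ! i)) = (\<Prod>i<n. complex_of_int (sheet a hat (ws ! i)))" by simp
    also have "\<dots> = (\<Prod>i<n. eps (hd (ws ! i)) * eps (last (ws ! i)) * X i)" by (rule prod.cong) (simp_all add: sh)
    also have "\<dots> = (\<Prod>i<n. eps (hd (ws ! i)) * eps (last (ws ! i))) * (\<Prod>i<n. X i)" by (rule prod.distrib)
    also have "(\<Prod>i<n. eps (hd (ws ! i)) * eps (last (ws ! i))) = (\<Prod>j<2*n. eps (b j))"
      by (rule endpoints_prod[OF adm inj])
    also have "(\<Prod>i<n. X i) = prod (sigs a) U"
      unfolding U_def X_def by (rule prod.UNION_disjoint[symmetric]) (use disj in auto)
    finally show ?thesis .
  qed
  have Usub: "U \<subseteq> \<gamma>" using trw by (auto simp: U_def trail_in_def)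
  have rem: "remainder \<gamma> ws = \<gamma> - U"
  proof -
    have sw: "set ws = (\<lambda>i. ws ! i) ` {..<n}"
      by (metis lenws atLeast0LessThan set_map set_upt map_nth)
    have "(\<Union>w\<in>set ws. set (steps w)) = U" unfolding U_def sw by (simp add: image_image)
    then show ?thesis by (simp add: remainder_def)
  qed
  define Rm where "Rm = remainder \<gamma> ws"
  have RmH: "Rm \<subseteq> half_edges \<delta> F" using gH by (auto simp: Rm_def remainder_def)
  have ncl: "noncrossing_loop Rm l" if "l \<in> set L" for l using ld that by (simp add: loop_decomp_def Rm_def)
  have ldisj: "set (steps (L ! i)) \<inter> set (steps (L ! i')) = {}" if "i < length L" "i' < length L" "i \<noteq> i'" for i i'
    using ld that by (simp add: loop_decomp_def)
  have lun: "(\<Union>l\<in>set L. set (steps l)) = Rm" using ld by (simp add: loop_decomp_def Rm_def)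
  have P2: "complex_of_int ((-1::int) ^ loops_around a L) = prod (sigs a) Rm"
  proof -
    have "complex_of_int ((-1::int) ^ loops_around a L)
        = prod_list (map (\<lambda>l. if winding_number (polypath l) a \<noteq> 0 then -1 else 1) L)"
      unfolding loops_around_def by (rule neg1_pow_filter)
    also have "\<dots> = prod_list (map (\<lambda>l. prod (sigs a) (set (steps l))) L)"
      by (rule arg_cong[where f=prod_list], rule map_cong) (simp_all add: loop_sign[OF RmH ncl])
    also have "\<dots> = (\<Prod>i<length L. prod (sigs a) (set (steps (L ! i))))" by (rule prod_list_map_nth)
    also have "\<dots> = prod (sigs a) (\<Union>i<length L. set (steps (L ! i)))"
      by (rule prod.UNION_disjoint[symmetric]) (use ldisj in auto)
    also have "(\<Union>i<length L. set (steps (L ! i))) = Rm"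
    proof -
      have sL: "set L = (\<lambda>i. L ! i) ` {..<length L}"
        by (metis atLeast0LessThan set_map set_upt map_nth)
      show ?thesis using lun unfolding sL by (simp add: image_image)
    qed
    finally show ?thesis .
  qed
  have "complex_of_int ((-1::int) ^ loops_around a L * (\<Prod>i<n. sheet a hat (ws ! i)))
      = prod (sigs a) Rm * ((\<Prod>j<2*n. eps (b j)) * prod (sigs a) U)"
    using P1 P2 by simp
  also have "\<dots> = (\<Prod>j<2*n. eps (b j)) * (prod (sigs a) (\<gamma> - U) * prod (sigs a) U)"
    by (simp add: Rm_def rem algebra_simps)
  also have "prod (sigs a) (\<gamma> - U) * prod (sigs a) U = prod (sigs a) \<gamma>"
    by (rule prod.subset_diff[OF Usub fing, symmetric])
  finally show ?thesis by (simp add: eps_def)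
qed

end

theorem proposition3p13:
  fixes \<delta> :: real and F :: "complex set" and a :: complex and b :: "nat \<Rightarrow> complex"
    and n :: nat and hat :: "complex \<Rightarrow> complex" and \<gamma> :: "complex set set"
    and ws ws' L L' :: "complex list list"
  assumes "\<delta> > 0"
    and "finite F" and "\<forall>c\<in>F. face_center \<delta> c"
    and "a \<in> F"
    and "inj_on b {..<2*n}"
    and "\<forall>j<2*n. b j \<in> medial \<delta> F"
    and "\<forall>j<2*n. (hat (b j))^2 = b j - a"
    and "config \<delta> F b n \<gamma>"
    and "admissible \<delta> F b n \<gamma> ws"
    and "admissible \<delta> F b n \<gamma> ws'"
    and "loop_decomp (remainder \<gamma> ws) L"
    and "loop_decomp (remainder \<gamma> ws') L'"
  shows "(-1::int) ^ loops_around a L * (\<Prod>i<n. sheet a hat (ws ! i))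
       = (-1::int) ^ loops_around a L' * (\<Prod>i<n. sheet a hat (ws' ! i))"
proof -
  interpret dom \<delta> F a using assms(1-4) by unfold_locales
  have "complex_of_int ((-1::int) ^ loops_around a L * (\<Prod>i<n. sheet a hat (ws ! i)))
      = complex_of_int ((-1::int) ^ loops_around a L' * (\<Prod>i<n. sheet a hat (ws' ! i)))"
    using main_side[OF assms(8) assms(9) assms(11) assms(5) assms(7)]
          main_side[OF assms(8) assms(10) assms(12) assms(5) assms(7)] by simp
  then show ?thesis by (simp only: of_int_eq_iff)
qed


end
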